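(* Let $\alpha,\beta\in[0,r]\cap A$ with $\alpha<\beta$, let $I=(\alpha,\beta)$, and let $x\in\mathrm{F}_I$ satisfy $\mathrm{fix}(x)\cap I\cap A=\varnothing$. Then the centralizer of $x$ in $\mathrm{F}_I$ is cyclic.
   Context: Fix an admissible triple $(r,\Lambda,A)$: $r>0$, $\Lambda\le\mathbb R^*_+$ a nontrivial multiplicative subgroup, $A\subseteq\mathbb R$ an additive subgroup with $r\in A$ and $\Lambda A\subseteq A$. $\mathrm{F}=\mathrm{F}(r,\Lambda,A)$ is the group of homeomorphisms of $[0,r)$ that are piecewise affine with finitely many breakpoints, all slopes in $\Lambda$, breakpoints and their images in $A$; maps act on the right. $\mathrm{fix}(g)$ is the fixed-point set of $g$, $\mathrm{supp}(g)$ its complement, and $\mathrm{F}_S=\{x\in\mathrm{F}\mid\mathrm{supp}(x)\subseteq S\}$. *)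

theory Defs
  imports "HOL-Analysis.Analysis"
begin

definition admissible :: "real \<Rightarrow> real set \<Rightarrow> real set \<Rightarrow> bool" where
  "admissible r \<Lambda> A \<longleftrightarrow>
     r > 0
   \<and> \<Lambda> \<subseteq> {0<..} \<and> 1 \<in> \<Lambda>
   \<and> (\<forall>a\<in>\<Lambda>. \<forall>b\<in>\<Lambda>. a * b \<in> \<Lambda>)
   \<and> (\<forall>a\<in>\<Lambda>. inverse a \<in> \<Lambda>)
   \<and> \<Lambda> \<noteq> {1}
   \<and> 0 \<in> A \<and> (\<forall>a\<in>A. \<forall>b\<in>A. a + b \<in> A) \<and> (\<forall>a\<in>A. - a \<in> A)
   \<and> r \<in> A
   \<and> (\<forall>l\<in>\<Lambda>. \<forall>a\<in>A. l * a \<in> A)"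

text \<open>Elements of F(r,Lambda,A): homeomorphisms of [0,r), represented as functions
  on the reals that are the identity outside [0,r). The finite set P contains all
  breakpoints (together with 0 and r); on each interval between consecutive points
  of P the map is affine with slope in Lambda; points of P and their images lie in A.\<close>
definition Fgrp :: "real \<Rightarrow> real set \<Rightarrow> real set \<Rightarrow> (real \<Rightarrow> real) set" where
  "Fgrp r \<Lambda> A = {f.
      bij_betw f {0..<r} {0..<r}
    \<and> continuous_on {0..<r} f
    \<and> (\<forall>t. t \<notin> {0..<r} \<longrightarrow> f t = t)
    \<and> (\<exists>P. finite P \<and> P \<subseteq> A \<inter> {0..r} \<and> 0 \<in> P \<and> r \<in> P
         \<and> (\<forall>p\<in>P. p < r \<longrightarrow> f p \<in> A)
         \<and> (\<forall>a\<in>P. \<forall>b\<in>P. a < b \<and> (\<forall>q\<in>P. \<not> (a < q \<and> q < b)) \<longrightarrow>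
              (\<exists>l\<in>\<Lambda>. \<exists>c. \<forall>t\<in>{a..<b}. f t = l * t + c)))}"

definition fixset :: "real \<Rightarrow> (real \<Rightarrow> real) \<Rightarrow> real set" where
  "fixset r g = {t \<in> {0..<r}. g t = t}"

definition suppset :: "real \<Rightarrow> (real \<Rightarrow> real) \<Rightarrow> real set" where
  "suppset r g = {0..<r} - fixset r g"

definition Fsupp :: "real \<Rightarrow> real set \<Rightarrow> real set \<Rightarrow> real set \<Rightarrow> (real \<Rightarrow> real) set" where
  "Fsupp r \<Lambda> A S = {g \<in> Fgrp r \<Lambda> A. suppset r g \<subseteq> S}"

definition zpow :: "(real \<Rightarrow> real) \<Rightarrow> int \<Rightarrow> (real \<Rightarrow> real)" where
  "zpow g n = (if 0 \<le> n then g ^^ nat n else (inv g) ^^ nat (- n))"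

definition centralizer_in :: "(real \<Rightarrow> real) set \<Rightarrow> (real \<Rightarrow> real) \<Rightarrow> (real \<Rightarrow> real) set" where
  "centralizer_in H x = {y \<in> H. y \<circ> x = x \<circ> y}"

definition cyclic_set :: "(real \<Rightarrow> real) set \<Rightarrow> bool" where
  "cyclic_set C \<longleftrightarrow> (\<exists>g. C = range (zpow g))"

end

theory Submission
  imports Defs
begin

lemma smono_surj_isCont:
  fixes f :: "real \<Rightarrow> real"
  assumes sm: "strict_mono f" and su: "surj f"
  shows "isCont f t"
proof (rule continuous_at_eps_delta[THEN iffD2], intro allI impI)
  fix e :: real assume e: "e > 0"
  obtain a where a: "f a = f t - e" using surjD[OF su] by metis
  obtain b where b: "f b = f t + e" using surjD[OF su] by metis
  have "f a < f t" using a e by simp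
  then have at: "a < t" using strict_mono_less[OF sm] by simp
  have "f t < f b" using b e by simp
  then have tb: "t < b" using strict_mono_less[OF sm] by simp
  show "\<exists>d>0. \<forall>y. dist y t < d \<longrightarrow> dist (f y) (f t) < e"
  proof (intro exI[of _ "min (t - a) (b - t)"] conjI allI impI)
    show "min (t - a) (b - t) > 0" using at tb by simp
    fix y assume "dist y t < min (t - a) (b - t)"
    then have "a < y" "y < b" by (auto simp: dist_real_def)
    then have "f a < f y" "f y < f b" using sm by (auto simp: strict_mono_less)
    then show "dist (f y) (f t) < e" using a b by (auto simp: dist_real_def)
  qed
qed

definition consec :: "real set \<Rightarrow> real \<Rightarrow> real \<Rightarrow> bool" where
  "consec P a b \<longleftrightarrow> a \<in> P \<and> b \<in> P \<and> a < b \<and> (\<forall>q\<in>P. \<not> (a < q \<and> q < b))"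

lemma piece:
  fixes P :: "real set"
  assumes "finite P" "u < v" "a0 \<in> P" "a0 \<le> u" "b0 \<in> P" "v \<le> b0"
    and "\<forall>q\<in>P. \<not> (u < q \<and> q < v)"
  shows "\<exists>a b. consec P a b \<and> a \<le> u \<and> v \<le> b"
proof -
  define a where "a = Max {q\<in>P. q \<le> u}"
  define b where "b = Min {q\<in>P. u < q}"
  have fa: "finite {q\<in>P. q \<le> u}" "{q\<in>P. q \<le> u} \<noteq> {}" using assms by auto
  have fb: "finite {q\<in>P. u < q}" "{q\<in>P. u < q} \<noteq> {}" using assms by auto
  have aP: "a \<in> P" "a \<le> u" using Max_in[OF fa] unfolding a_def by auto
  have bP: "b \<in> P" "u < b" using Min_in[OF fb] unfolding b_def by auto
  have bv: "v \<le> b" using assms(7) bP by force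
  have "\<forall>q\<in>P. \<not> (a < q \<and> q < b)"
  proof (intro ballI notI)
    fix q assume q: "q \<in> P" "a < q \<and> q < b"
    show False
    proof (cases "q \<le> u")
      case True then have "q \<le> a" unfolding a_def using fa q by auto
      then show False using q by auto
    next
      case False then have "b \<le> q" unfolding b_def using fb q by auto
      then show False using q by auto
    qed
  qed
  then show ?thesis using aP bP bv unfolding consec_def by (intro exI[of _ a] exI[of _ b]) auto
qed

locale adm =
  fixes r :: real and \<Lambda> A :: "real set"
  assumes adm: "admissible r \<Lambda> A"
begin

lemma r_pos: "r > 0" and Lpos: "\<And>l. l \<in> \<Lambda> \<Longrightarrow> l > 0" and L1: "1 \<in> \<Lambda>"
  and Lmult: "\<And>a b. a \<in> \<Lambda> \<Longrightarrow> b \<in> \<Lambda> \<Longrightarrow> a * b \<in> \<Lambda>"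
  and Linv: "\<And>a. a \<in> \<Lambda> \<Longrightarrow> inverse a \<in> \<Lambda>"
  and Lnt: "\<Lambda> \<noteq> {1}"
  and A0: "0 \<in> A" and Aadd: "\<And>a b. a \<in> A \<Longrightarrow> b \<in> A \<Longrightarrow> a + b \<in> A"
  and Aneg: "\<And>a. a \<in> A \<Longrightarrow> - a \<in> A" and rA: "r \<in> A"
  and LA: "\<And>l a. l \<in> \<Lambda> \<Longrightarrow> a \<in> A \<Longrightarrow> l * a \<in> A"
  using adm unfolding admissible_def by auto

lemma Adiff: "a \<in> A \<Longrightarrow> b \<in> A \<Longrightarrow> a - b \<in> A"
  using Aadd[of a "-b"] Aneg[of b] by simp

definition brk :: "(real \<Rightarrow> real) \<Rightarrow> real set \<Rightarrow> bool" where
  "brk f P \<longleftrightarrow> finite P \<and> P \<subseteq> A \<inter> {0..r} \<and> 0 \<in> P \<and> r \<in> P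
         \<and> (\<forall>p\<in>P. p < r \<longrightarrow> f p \<in> A)
         \<and> (\<forall>a\<in>P. \<forall>b\<in>P. a < b \<and> (\<forall>q\<in>P. \<not> (a < q \<and> q < b)) \<longrightarrow>
              (\<exists>l\<in>\<Lambda>. \<exists>c. \<forall>t\<in>{a..<b}. f t = l * t + c))"

lemma brk_consec: "brk f P \<Longrightarrow> consec P a b \<Longrightarrow> \<exists>l\<in>\<Lambda>. \<exists>c. \<forall>t\<in>{a..<b}. f t = l * t + c"
  unfolding brk_def consec_def by blast

lemma brkI: "finite P \<Longrightarrow> P \<subseteq> A \<inter> {0..r} \<Longrightarrow> 0 \<in> P \<Longrightarrow> r \<in> P \<Longrightarrow> (\<forall>p\<in>P. p < r \<longrightarrow> f p \<in> A)
  \<Longrightarrow> (\<And>a b. consec P a b \<Longrightarrow> \<exists>l\<in>\<Lambda>. \<exists>c. \<forall>t\<in>{a..<b}. f t = l * t + c) \<Longrightarrow> brk f P"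
  unfolding brk_def consec_def by blast

lemma Fgrp_iff: "f \<in> Fgrp r \<Lambda> A \<longleftrightarrow> bij_betw f {0..<r} {0..<r} \<and> continuous_on {0..<r} f
   \<and> (\<forall>t. t \<notin> {0..<r} \<longrightarrow> f t = t) \<and> (\<exists>P. brk f P)"
  unfolding Fgrp_def brk_def by (simp only: mem_Collect_eq)

lemma F_D:
  assumes "f \<in> Fgrp r \<Lambda> A"
  shows "bij_betw f {0..<r} {0..<r}" "continuous_on {0..<r} f" "\<And>t. t \<notin> {0..<r} \<Longrightarrow> f t = t"
    "\<exists>P. brk f P"
proof -
  note H = Fgrp_iff[THEN iffD1, OF assms]
  show "bij_betw f {0..<r} {0..<r}" using H by (rule conjunct1)
  show "continuous_on {0..<r} f" using H[THEN conjunct2] by (rule conjunct1)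
  show "\<And>t. t \<notin> {0..<r} \<Longrightarrow> f t = t" using H[THEN conjunct2, THEN conjunct2, THEN conjunct1] by simp
  show "\<exists>P. brk f P" using H[THEN conjunct2, THEN conjunct2, THEN conjunct2] .
qed

lemma F_zero:
  assumes "f \<in> Fgrp r \<Lambda> A" shows "f 0 = 0"
proof (rule ccontr)
  assume ne: "f 0 \<noteq> 0"
  have bij: "bij_betw f {0..<r} {0..<r}" and co: "continuous_on {0..<r} f" using F_D[OF assms] by auto
  have rng: "\<And>t. t \<in> {0..<r} \<Longrightarrow> f t \<in> {0..<r}" by (rule bij_betw_apply[OF bij])
  have "f 0 \<in> {0..<r}" using r_pos by (intro rng) simp
  then have pos: "f 0 > 0" using ne by auto
  have "0 \<in> f ` {0..<r}" using bij r_pos by (simp add: bij_betw_def)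
  then obtain t where t: "t \<in> {0..<r}" "f t = 0" by auto
  have t0: "t > 0" using t ne by (cases "t = 0") auto
  define u where "u = (t + r) / 2"
  have u: "t < u" "u < r" using t unfolding u_def by auto
  have "continuous_on {0..u} f" by (rule continuous_on_subset[OF co]) (use u in auto)
  moreover have "inj_on f {0..u}" using u by (intro inj_on_subset[OF bij_betw_imp_inj_on[OF bij]]) auto
  ultimately have "(f 0 < f t \<and> f t < f u) \<or> (f u < f t \<and> f t < f 0)"
    using continuous_inj_imp_mono[of 0 t u f] t0 u by auto
  moreover have "f u \<ge> 0" using rng[of u] u t by simp
  ultimately show False using pos t by auto
qed

lemma F_smono:
  assumes "f \<in> Fgrp r \<Lambda> A" shows "strict_mono f"
proof -
  have bij: "bij_betw f {0..<r} {0..<r}" and co: "continuous_on {0..<r} f"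
    and out: "\<forall>t. t \<notin> {0..<r} \<longrightarrow> f t = t" using F_D[OF assms] by auto
  have f0: "f 0 = 0" using F_zero assms .
  have rng: "\<And>t. t \<in> {0..<r} \<Longrightarrow> f t \<in> {0..<r}" by (rule bij_betw_apply[OF bij])
  have inner: "f t1 < f t2" if "0 < t1" "t1 < t2" "t2 < r" for t1 t2
  proof -
    have "continuous_on {0..t2} f" by (rule continuous_on_subset[OF co]) (use that in auto)
    moreover have "inj_on f {0..t2}" using that by (intro inj_on_subset[OF bij_betw_imp_inj_on[OF bij]]) auto
    ultimately have "(f 0 < f t1 \<and> f t1 < f t2) \<or> (f t2 < f t1 \<and> f t1 < f 0)"
      using continuous_inj_imp_mono[of 0 t1 t2 f] that by auto
    moreover have "f t1 \<ge> 0" using rng that by auto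
    ultimately show ?thesis using f0 by auto
  qed
  have inner0: "f t1 < f t2" if "0 \<le> t1" "t1 < t2" "t2 < r" for t1 t2
  proof (cases "t1 = 0")
    case True
    have "f t2 \<ge> 0" using rng that by auto
    moreover have "f t2 \<noteq> 0"
    proof
      assume "f t2 = 0"
      then have "f t2 = f 0" using f0 by simp
      moreover have "inj_on f {0..<r}" using bij by (simp add: bij_betw_def)
      ultimately have "t2 = 0" using that r_pos by (auto dest: inj_onD)
      then show False using that True by simp
    qed
    ultimately show ?thesis using True f0 by auto
  qed (use inner that in auto)
  show ?thesis
  proof (rule strict_monoI)
    fix t1 t2 :: real assume lt: "t1 < t2"
    show "f t1 < f t2"
    proof (cases "t1 < 0")
      case True
      then have "f t1 = t1" using out by auto
      moreover have "f t2 \<ge> min t2 0"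
        using out rng[of t2] by (cases "t2 \<in> {0..<r}") auto
      ultimately show ?thesis using lt True by auto
    next
      case False
      show ?thesis
      proof (cases "t1 < r")
        case True
        then show ?thesis
        proof (cases "t2 < r")
          case True then show ?thesis using inner0 False lt \<open>t1 < r\<close> by auto
        next
          case f2: False
          then have "f t2 = t2" using out by auto
          moreover have "f t1 < r" using rng False True by auto
          ultimately show ?thesis using f2 by auto
        qed
      next
        case f1: False
        then show ?thesis using out lt by auto
      qed
    qed
  qed
qed

lemma F_bij:
  fixes f :: "real \<Rightarrow> real"
  assumes "f \<in> Fgrp r \<Lambda> A" shows "bij f"
proof -
  have bij: "bij_betw f {0..<r} {0..<r}" and out: "\<forall>t. t \<notin> {0..<r} \<longrightarrow> f t = t"
    using F_D[OF assms] by auto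
  have "inj f" using F_smono[OF assms] by (rule strict_mono_imp_inj_on)
  moreover have "surj f"
  proof -
    { fix y
      have "y \<in> range f"
      proof (cases "y \<in> {0..<r}")
        case True
        then have "y \<in> f ` {0..<r}" using bij by (simp add: bij_betw_def)
        then show ?thesis by auto
      next
        case False
        then have "y = f y" using out by auto
        then show ?thesis by (rule range_eqI)
      qed }
    then show ?thesis by auto
  qed
  ultimately show ?thesis unfolding bij_def by (rule conjI)
qed

lemma F_cont: assumes "f \<in> Fgrp r \<Lambda> A" shows "isCont f t"
  by (rule smono_surj_isCont[OF F_smono[OF assms] bij_is_surj[OF F_bij[OF assms]]])

end

definition affnear :: "(real \<Rightarrow> real) \<Rightarrow> real \<Rightarrow> bool" where
  "affnear f t \<longleftrightarrow> (\<exists>e>0. \<exists>a b. \<forall>u. \<bar>u - t\<bar> < e \<longrightarrow> f u = a * u + b)"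

lemma affnearI: "e > 0 \<Longrightarrow> (\<And>u. \<bar>u - t\<bar> < e \<Longrightarrow> f u = a * u + b) \<Longrightarrow> affnear f t"
  unfolding affnear_def by blast

context adm
begin

lemma piece_pt:
  assumes "finite P" "a0 \<in> P" "a0 \<le> t" "b0 \<in> P" "t < b0"
  shows "\<exists>a b. consec P a b \<and> a \<le> t \<and> t < b"
proof -
  define v where "v = Min {q\<in>P. t < q}"
  have fb: "finite {q\<in>P. t < q}" "{q\<in>P. t < q} \<noteq> {}" using assms by auto
  have v: "v \<in> P" "t < v" using Min_in[OF fb] unfolding v_def by auto
  have "\<forall>q\<in>P. \<not> (t < q \<and> q < v)" unfolding v_def using fb by auto
  from piece[OF assms(1) v(2) assms(2,3) v(1) order_refl this] obtain a b
    where "consec P a b" "a \<le> t" "v \<le> b" by auto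
  then show ?thesis using v by (intro exI[of _ a] exI[of _ b]) auto
qed

lemma F_range: "f \<in> Fgrp r \<Lambda> A \<Longrightarrow> f t \<in> {0..<r} \<longleftrightarrow> t \<in> {0..<r}"
proof
  assume f: "f \<in> Fgrp r \<Lambda> A"
  { assume "t \<in> {0..<r}" then show "f t \<in> {0..<r}" by (rule bij_betw_apply[OF F_D(1)[OF f]]) }
  { assume ft: "f t \<in> {0..<r}"
    show "t \<in> {0..<r}"
    proof (rule ccontr)
      assume "t \<notin> {0..<r}" then have "f t = t" using F_D(3)[OF f] by simp
      then show False using ft \<open>t \<notin> {0..<r}\<close> by simp
    qed }
qed

lemma F_r: "f \<in> Fgrp r \<Lambda> A \<Longrightarrow> f r = r"
  using F_D(3)[of f r] by simp

lemma F_le_r: assumes "f \<in> Fgrp r \<Lambda> A" "t \<le> r" shows "f t \<le> r"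
proof -
  have "f t \<le> f r" using assms strict_mono_less_eq[OF F_smono[OF assms(1)]] by simp
  then show ?thesis using F_r[OF assms(1)] by simp
qed

lemma F_ge_0: assumes "f \<in> Fgrp r \<Lambda> A" "0 \<le> t" shows "0 \<le> f t"
proof -
  have "f 0 \<le> f t" using assms strict_mono_less_eq[OF F_smono[OF assms(1)]] by simp
  then show ?thesis using F_zero[OF assms(1)] by simp
qed

lemma F_piece:
  assumes f: "f \<in> Fgrp r \<Lambda> A" and P: "brk f P" and t: "t \<in> {0..<r}"
  shows "\<exists>a b l c. consec P a b \<and> a \<le> t \<and> t < b \<and> l \<in> \<Lambda> \<and> (\<forall>u\<in>{a..<b}. f u = l * u + c)"
proof -
  have "finite P" "0 \<in> P" "r \<in> P" using P unfolding brk_def by auto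
  then obtain a b where ab: "consec P a b" "a \<le> t" "t < b" using piece_pt[of P 0 t r] t by auto
  then show ?thesis using brk_consec[OF P ab(1)] by blast
qed

lemma F_A:
  assumes f: "f \<in> Fgrp r \<Lambda> A" and t: "t \<in> A" shows "f t \<in> A"
proof (cases "t \<in> {0..<r}")
  case False then show ?thesis using F_D(3)[OF f] t by simp
next
  case True
  obtain P where P: "brk f P" using F_D(4)[OF f] by auto
  obtain a b l c where abl: "consec P a b" "a \<le> t" "t < b" "l \<in> \<Lambda>" "\<forall>u\<in>{a..<b}. f u = l * u + c"
    using F_piece[OF f P True] by auto
  have aP: "a \<in> P" "b \<in> P" "a < b" using abl(1) unfolding consec_def by auto
  have PA: "P \<subseteq> A \<inter> {0..r}" and fP: "\<forall>p\<in>P. p < r \<longrightarrow> f p \<in> A" using P unfolding brk_def by auto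
  have "a < r" using aP PA by auto
  then have "f a \<in> A" using fP aP by auto
  moreover have "f a = l * a + c" using abl aP by auto
  ultimately have "c \<in> A" using Adiff[of "f a" "l * a"] LA[OF abl(4), of a] aP PA by auto
  moreover have "f t = l * t + c" using abl by auto
  ultimately show ?thesis using Aadd LA[OF abl(4) t] by auto
qed

lemma F_Ainv:
  assumes f: "f \<in> Fgrp r \<Lambda> A" and t: "f t \<in> A" shows "t \<in> A"
proof (cases "t \<in> {0..<r}")
  case False then show ?thesis using F_D(3)[OF f] t by simp
next
  case True
  obtain P where P: "brk f P" using F_D(4)[OF f] by auto
  obtain a b l c where abl: "consec P a b" "a \<le> t" "t < b" "l \<in> \<Lambda>" "\<forall>u\<in>{a..<b}. f u = l * u + c"
    using F_piece[OF f P True] by auto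
  have aP: "a \<in> P" "b \<in> P" "a < b" using abl(1) unfolding consec_def by auto
  have PA: "P \<subseteq> A \<inter> {0..r}" and fP: "\<forall>p\<in>P. p < r \<longrightarrow> f p \<in> A" using P unfolding brk_def by auto
  have "a < r" using aP PA by auto
  then have "f a \<in> A" using fP aP by auto
  moreover have "f a = l * a + c" using abl aP by auto
  ultimately have c: "c \<in> A" using Adiff[of "f a" "l * a"] LA[OF abl(4), of a] aP PA by auto
  have "f t = l * t + c" using abl by auto
  moreover have "l > 0" using Lpos abl(4) by auto
  ultimately have "t = inverse l * (f t - c)" by (simp add: field_simps)
  moreover have "inverse l * (f t - c) \<in> A" using LA[OF Linv[OF abl(4)] Adiff[OF t c]] .
  ultimately show ?thesis by simp
qed

lemma affnear_notP:
  assumes f: "f \<in> Fgrp r \<Lambda> A" and P: "brk f P" and t: "t \<notin> P"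
  shows "affnear f t"
proof -
  have Pr: "0 \<in> P" "r \<in> P" using P unfolding brk_def by auto
  have "t \<noteq> r" using t Pr by auto
  then have "t < 0 \<or> t \<in> {0..<r} \<or> t > r" by auto
  then consider "t < 0" | "t \<in> {0..<r}" | "t > r" by blast
  then show ?thesis
  proof cases
    case 1
    show ?thesis
      by (rule affnearI[of "-t" _ _ 1 0]) (use 1 F_D(3)[OF f] in \<open>auto simp: abs_less_iff\<close>)
  next
    case 3
    show ?thesis
      by (rule affnearI[of "t - r" _ _ 1 0]) (use 3 F_D(3)[OF f] in \<open>auto simp: abs_less_iff\<close>)
  next
    case 2
    obtain a b l c where abl: "consec P a b" "a \<le> t" "t < b" "l \<in> \<Lambda>" "\<forall>u\<in>{a..<b}. f u = l * u + c"
      using F_piece[OF f P 2] by auto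
    have "a \<in> P" using abl(1) unfolding consec_def by auto
    then have at: "a < t" using abl(2) t by (cases "a = t") auto
    show ?thesis
    proof (rule affnearI[of "min (t - a) (b - t)" _ _ l c])
      show "0 < min (t - a) (b - t)" using at abl by auto
      fix u assume "\<bar>u - t\<bar> < min (t - a) (b - t)"
      then have "u \<in> {a..<b}" by auto
      then show "f u = l * u + c" using abl by auto
    qed
  qed
qed

lemma F_compose:
  assumes f: "f \<in> Fgrp r \<Lambda> A" and g: "g \<in> Fgrp r \<Lambda> A"
  shows "f \<circ> g \<in> Fgrp r \<Lambda> A"
proof -
  obtain Pf where Pf: "brk f Pf" using F_D(4)[OF f] by auto
  obtain Pg where Pg: "brk g Pg" using F_D(4)[OF g] by auto
  define Q where "Q = Pg \<union> g -` Pf"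
  have injg: "inj g" using F_bij[OF g] bij_is_inj by auto
  have smg: "strict_mono g" using F_smono[OF g] .
  have Pff: "finite Pf" "Pf \<subseteq> A \<inter> {0..r}" "0 \<in> Pf" "r \<in> Pf" using Pf unfolding brk_def by auto
  have Pgf: "finite Pg" "Pg \<subseteq> A \<inter> {0..r}" "0 \<in> Pg" "r \<in> Pg" using Pg unfolding brk_def by auto
  have vA: "g -` Pf \<subseteq> A \<inter> {0..r}"
  proof
    fix q assume q: "q \<in> g -` Pf"
    then have gq: "g q \<in> A" "0 \<le> g q" "g q \<le> r" using Pff by auto
    have "q \<in> A" using F_Ainv[OF g gq(1)] .
    moreover have "q \<in> {0..r}"
    proof (cases "q \<in> {0..<r}")
      case True then show ?thesis by auto
    next
      case False then have "g q = q" using F_D(3)[OF g] by auto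
      then show ?thesis using gq by auto
    qed
    ultimately show "q \<in> A \<inter> {0..r}" by auto
  qed
  have brkQ: "brk (f \<circ> g) Q"
  proof (rule brkI)
    show "finite Q" unfolding Q_def using Pgf(1) finite_vimageI[OF Pff(1) injg] by auto
    show QA: "Q \<subseteq> A \<inter> {0..r}" unfolding Q_def using Pgf(2) vA by auto
    show "0 \<in> Q" "r \<in> Q" unfolding Q_def using Pgf by auto
    show "\<forall>p\<in>Q. p < r \<longrightarrow> (f \<circ> g) p \<in> A"
      using QA F_A[OF f F_A[OF g]] by auto
    fix a b assume ab: "consec Q a b"
    have abQ: "a \<in> Q" "b \<in> Q" "a < b" "\<forall>q\<in>Q. \<not> (a < q \<and> q < b)" using ab unfolding consec_def by auto
    have a0: "0 \<le> a" and br: "b \<le> r" using abQ QA by auto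
    obtain a1 b1 where ab1: "consec Pg a1 b1" "a1 \<le> a" "b \<le> b1"
      using piece[OF Pgf(1) abQ(3) Pgf(3) a0 Pgf(4) br] abQ(4) unfolding Q_def by auto
    obtain l c where lc: "l \<in> \<Lambda>" "\<forall>u\<in>{a1..<b1}. g u = l * u + c" using brk_consec[OF Pg ab1(1)] by auto
    have gab: "g a < g b" using smg abQ(3) by (simp add: strict_mono_less)
    have ga0: "0 \<le> g a" using F_ge_0[OF g a0] .
    have gbr: "g b \<le> r" using F_le_r[OF g br] .
    have noP: "\<forall>q\<in>Pf. \<not> (g a < q \<and> q < g b)"
    proof (intro ballI notI)
      fix q assume q: "q \<in> Pf" "g a < q \<and> q < g b"
      have "\<exists>w. q = g w" by (rule surjD[OF bij_is_surj[OF F_bij[OF g]]])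
      then obtain w where w: "q = g w" by blast
      have "a < w" "w < b" using q w smg by (auto simp: strict_mono_less)
      moreover have "w \<in> Q" unfolding Q_def using q w by auto
      ultimately show False using abQ(4) by auto
    qed
    obtain a2 b2 where ab2: "consec Pf a2 b2" "a2 \<le> g a" "g b \<le> b2"
      using piece[OF Pff(1) gab Pff(3) ga0 Pff(4) gbr noP] by auto
    obtain l2 c2 where lc2: "l2 \<in> \<Lambda>" "\<forall>u\<in>{a2..<b2}. f u = l2 * u + c2" using brk_consec[OF Pf ab2(1)] by auto
    show "\<exists>l\<in>\<Lambda>. \<exists>c. \<forall>t\<in>{a..<b}. (f \<circ> g) t = l * t + c"
    proof (intro bexI[of _ "l2 * l"] exI[of _ "l2 * c + c2"] ballI)
      show "l2 * l \<in> \<Lambda>" using Lmult lc lc2 by auto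
      fix t assume t: "t \<in> {a..<b}"
      then have gt: "g t = l * t + c" using lc ab1 by auto
      have "g a \<le> g t" "g t < g b" using t smg by (auto simp: strict_mono_less strict_mono_less_eq)
      then have "f (g t) = l2 * g t + c2" using lc2 ab2 by auto
      then show "(f \<circ> g) t = l2 * l * t + (l2 * c + c2)" using gt by (simp add: algebra_simps)
    qed
  qed
  have bij: "bij_betw (f \<circ> g) {0..<r} {0..<r}" using bij_betw_trans[OF F_D(1)[OF g] F_D(1)[OF f]] .
  have cont: "continuous_on {0..<r} (f \<circ> g)"
    by (intro continuous_at_imp_continuous_on ballI continuous_at_compose F_cont[OF g] F_cont[OF f])
  have out: "\<forall>t. t \<notin> {0..<r} \<longrightarrow> (f \<circ> g) t = t" using F_D(3)[OF f] F_D(3)[OF g] by auto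
  show ?thesis unfolding Fgrp_iff using bij cont out brkQ by blast
qed

lemma F_inv:
  assumes f: "f \<in> Fgrp r \<Lambda> A"
  shows "inv f \<in> Fgrp r \<Lambda> A"
proof -
  define h where "h = inv f"
  have bf: "bij f" using F_bij[OF f] .
  have fh: "\<And>t. f (h t) = t" unfolding h_def using bf by (simp add: bij_is_surj surj_f_inv_f)
  have hf: "\<And>t. h (f t) = t" unfolding h_def using bf by (simp add: bij_is_inj inv_f_f)
  have smf: "strict_mono f" using F_smono[OF f] .
  have smh: "strict_mono h"
  proof (rule strict_monoI)
    fix u v :: real assume uv: "u < v"
    show "h u < h v"
    proof (rule ccontr)
      assume "\<not> h u < h v" then have "h v \<le> h u" by simp
      then have "f (h v) \<le> f (h u)" using smf by (simp add: strict_mono_less_eq)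
      then show False using fh uv by simp
    qed
  qed
  have surjh: "surj h" by (rule surjI[of h f]) (rule hf)
  have injh: "inj h"
  proof (rule injI)
    fix u v assume "h u = h v" then have "f (h u) = f (h v)" by simp
    then show "u = v" by (simp only: fh)
  qed
  have hr: "h t \<in> {0..<r} \<longleftrightarrow> t \<in> {0..<r}" for t
  proof -
    have "h t \<in> {0..<r} \<longleftrightarrow> f (h t) \<in> {0..<r}" by (rule F_range[OF f, symmetric])
    then show ?thesis by (simp only: fh)
  qed
  have bij: "bij_betw h {0..<r} {0..<r}"
    unfolding bij_betw_def
  proof
    show "inj_on h {0..<r}" using inj_on_subset[OF injh subset_UNIV] .
    show "h ` {0..<r} = {0..<r}"
    proof
      show "h ` {0..<r} \<subseteq> {0..<r}"
      proof
        fix y assume "y \<in> h ` {0..<r}" then obtain t where "t \<in> {0..<r}" "y = h t" by blast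
        then show "y \<in> {0..<r}" using hr[of t] by simp
      qed
      show "{0..<r} \<subseteq> h ` {0..<r}"
      proof
        fix t assume "t \<in> {0..<r}"
        then have "f t \<in> {0..<r}" using F_range[OF f] by simp
        then show "t \<in> h ` {0..<r}" by (intro image_eqI[of t h "f t"]) (simp add: hf)
      qed
    qed
  qed
  have cont: "continuous_on {0..<r} h"
    by (intro continuous_at_imp_continuous_on ballI smono_surj_isCont[OF smh surjh])
  have out: "\<forall>t. t \<notin> {0..<r} \<longrightarrow> h t = t"
  proof (intro allI impI)
    fix t assume "t \<notin> {0..<r}" then have "f t = t" using F_D(3)[OF f] by simp
    then show "h t = t" using hf[of t] by simp
  qed
  obtain Pf where Pf: "brk f Pf" using F_D(4)[OF f] by auto
  have Pff: "finite Pf" "Pf \<subseteq> A \<inter> {0..r}" "0 \<in> Pf" "r \<in> Pf" using Pf unfolding brk_def by auto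
  define Q where "Q = f ` Pf"
  have brkQ: "brk h Q"
  proof (rule brkI)
    show "finite Q" unfolding Q_def using Pff by auto
    show QA: "Q \<subseteq> A \<inter> {0..r}"
    proof
      fix q assume "q \<in> Q"
      then obtain p where p: "p \<in> Pf" "q = f p" unfolding Q_def by auto
      then have "p \<in> A" "0 \<le> p" "p \<le> r" using Pff by auto
      then have "f p \<in> A" "0 \<le> f p" "f p \<le> r" using F_A[OF f] F_ge_0[OF f] F_le_r[OF f] by auto
      then show "q \<in> A \<inter> {0..r}" using p by simp
    qed
    show "0 \<in> Q" unfolding Q_def by (rule image_eqI[of _ f 0]) (use F_zero[OF f] Pff in auto)
    show "r \<in> Q" unfolding Q_def by (rule image_eqI[of _ f r]) (use F_r[OF f] Pff in auto)
    show "\<forall>p\<in>Q. p < r \<longrightarrow> h p \<in> A"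
    proof (intro ballI impI)
      fix q assume "q \<in> Q" then obtain p where p: "p \<in> Pf" "q = f p" unfolding Q_def by auto
      then show "h q \<in> A" using Pff(2) hf[of p] by auto
    qed
    fix a b assume ab: "consec Q a b"
    have abQ: "a \<in> Q" "b \<in> Q" "a < b" "\<forall>q\<in>Q. \<not> (a < q \<and> q < b)" using ab unfolding consec_def by auto
    obtain a0 where a0: "a0 \<in> Pf" "a = f a0" using abQ unfolding Q_def by auto
    obtain b0 where b0: "b0 \<in> Pf" "b = f b0" using abQ unfolding Q_def by auto
    have "a0 < b0" using a0 b0 abQ smf by (simp add: strict_mono_less)
    moreover have "\<forall>q\<in>Pf. \<not> (a0 < q \<and> q < b0)"
    proof (intro ballI notI)
      fix q assume q: "q \<in> Pf" "a0 < q \<and> q < b0"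
      then have "a < f q" "f q < b" using a0 b0 smf by (auto simp: strict_mono_less)
      moreover have "f q \<in> Q" unfolding Q_def using q by auto
      ultimately show False using abQ(4) by auto
    qed
    ultimately have "consec Pf a0 b0" unfolding consec_def using a0 b0 by auto
    from brk_consec[OF Pf this] obtain l c where lc: "l \<in> \<Lambda>" "\<forall>u\<in>{a0..<b0}. f u = l * u + c" by blast
    have lpos: "l > 0" using Lpos lc by auto
    show "\<exists>l\<in>\<Lambda>. \<exists>c. \<forall>t\<in>{a..<b}. h t = l * t + c"
    proof (intro bexI[of _ "inverse l"] exI[of _ "- c / l"] ballI)
      show "inverse l \<in> \<Lambda>" using Linv lc by auto
      fix t assume t: "t \<in> {a..<b}"
      then have "h a \<le> h t" "h t < h b" using smh by (auto simp: strict_mono_less strict_mono_less_eq)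
      then have "h t \<in> {a0..<b0}" using a0 b0 hf by auto
      then have "f (h t) = l * h t + c" using lc by auto
      then have "t = l * h t + c" using fh by simp
      then show "h t = inverse l * t + - c / l" using lpos by (simp add: field_simps)
    qed
  qed
  have "h \<in> Fgrp r \<Lambda> A" unfolding Fgrp_iff using bij cont out brkQ by blast
  then show ?thesis unfolding h_def .
qed

lemma F_id: "id \<in> Fgrp r \<Lambda> A"
proof -
  have "brk id {0, r}"
  proof (rule brkI)
    show "finite {0, r}" by simp
    show "{0, r} \<subseteq> A \<inter> {0..r}" using A0 rA r_pos by auto
    show "0 \<in> {0, r}" "r \<in> {0, r}" by auto
    show "\<forall>p\<in>{0, r}. p < r \<longrightarrow> id p \<in> A" using A0 rA by auto
    fix a b show "\<exists>l\<in>\<Lambda>. \<exists>c. \<forall>t\<in>{a..<b}. id t = l * t + c"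
      by (intro bexI[of _ 1] exI[of _ 0]) (use L1 in auto)
  qed
  then show ?thesis unfolding Fgrp_iff by (auto simp: bij_betw_id)
qed

end

context adm
begin

lemma Fsupp_D: assumes "f \<in> Fsupp r \<Lambda> A S" shows "f \<in> Fgrp r \<Lambda> A" "suppset r f \<subseteq> S"
  using assms unfolding Fsupp_def by auto

lemma Fsupp_out: assumes "f \<in> Fsupp r \<Lambda> A S" "t \<notin> S" shows "f t = t"
proof (cases "t \<in> {0..<r}")
  case True
  then show ?thesis using Fsupp_D(2)[OF assms(1)] assms(2) unfolding suppset_def fixset_def by auto
next
  case False then show ?thesis using F_D(3)[OF Fsupp_D(1)[OF assms(1)]] by simp
qed

lemma Fsupp_comp: assumes "f \<in> Fsupp r \<Lambda> A S" "g \<in> Fsupp r \<Lambda> A S" shows "f \<circ> g \<in> Fsupp r \<Lambda> A S"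
proof -
  have "f \<circ> g \<in> Fgrp r \<Lambda> A" using F_compose Fsupp_D(1) assms by blast
  moreover have "suppset r (f \<circ> g) \<subseteq> S"
  proof
    fix t assume t: "t \<in> suppset r (f \<circ> g)"
    then have t0: "t \<in> {0..<r}" "f (g t) \<noteq> t" unfolding suppset_def fixset_def by auto
    show "t \<in> S"
    proof (rule ccontr)
      assume "t \<notin> S"
      then have "g t = t" "f t = t" using Fsupp_out assms by auto
      then show False using t0 by simp
    qed
  qed
  ultimately show ?thesis unfolding Fsupp_def by simp
qed

lemma Fsupp_inv: assumes "f \<in> Fsupp r \<Lambda> A S" shows "inv f \<in> Fsupp r \<Lambda> A S"
proof -
  have f: "f \<in> Fgrp r \<Lambda> A" using Fsupp_D assms by blast
  have "inv f \<in> Fgrp r \<Lambda> A" using F_inv[OF f] .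
  moreover have "suppset r (inv f) \<subseteq> S"
  proof
    fix t assume t: "t \<in> suppset r (inv f)"
    then have t0: "t \<in> {0..<r}" "inv f t \<noteq> t" unfolding suppset_def fixset_def by auto
    show "t \<in> S"
    proof (rule ccontr)
      assume "t \<notin> S"
      then have "f t = t" using Fsupp_out assms by auto
      have "inv f (f t) = t" by (rule inv_f_f[OF bij_is_inj[OF F_bij[OF f]]])
      then have "inv f t = t" using \<open>f t = t\<close> by simp
      then show False using t0 by simp
    qed
  qed
  ultimately show ?thesis unfolding Fsupp_def by simp
qed

lemma Fsupp_id: "id \<in> Fsupp r \<Lambda> A S"
  unfolding Fsupp_def suppset_def fixset_def using F_id by auto

lemma Fsupp_funpow: assumes "f \<in> Fsupp r \<Lambda> A S" shows "f ^^ n \<in> Fsupp r \<Lambda> A S"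
proof (induction n)
  case 0 show ?case using Fsupp_id[of S] unfolding funpow_0 id_def .
next
  case (Suc n) show ?case unfolding funpow_Suc_right by (rule Fsupp_comp[OF Suc assms])
qed

lemma Fsupp_zpow: assumes "f \<in> Fsupp r \<Lambda> A S" shows "zpow f n \<in> Fsupp r \<Lambda> A S"
  unfolding zpow_def using Fsupp_funpow[OF assms] Fsupp_funpow[OF Fsupp_inv[OF assms]] by simp

lemma comm_funpow_pt: assumes "\<And>t. y (x t) = x (y t)" shows "(y ^^ n) (x t) = x ((y ^^ n) t)"
proof (induction n)
  case 0 then show ?case by simp
next
  case (Suc n) then show ?case using assms by simp
qed

lemma comm_funpow: assumes "y \<circ> x = x \<circ> y" shows "(y ^^ n) \<circ> x = x \<circ> (y ^^ n)"
proof -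
  have yx: "\<And>t. y (x t) = x (y t)" using assms by (simp add: fun_eq_iff)
  show ?thesis using comm_funpow_pt[of y x, OF yx] by (simp add: fun_eq_iff)
qed

lemma comm_inv: assumes "bij y" "y \<circ> x = x \<circ> y" shows "inv y \<circ> x = x \<circ> inv y"
proof -
  have yx: "\<And>t. y (x t) = x (y t)" using assms(2) by (simp add: fun_eq_iff)
  have a: "\<And>t. inv y (y t) = t" using bij_is_inj[OF assms(1)] by (simp add: inv_f_f)
  have b: "\<And>t. y (inv y t) = t" using bij_is_surj[OF assms(1)] by (simp add: surj_f_inv_f)
  have "inv y (x t) = x (inv y t)" for t
  proof -
    have "x t = x (y (inv y t))" by (simp only: b)
    also have "\<dots> = y (x (inv y t))" by (simp only: yx)
    finally have "inv y (x t) = inv y (y (x (inv y t)))" by simp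
    then show ?thesis by (simp only: a)
  qed
  then show ?thesis by (simp add: fun_eq_iff)
qed

definition cent where "cent S x = centralizer_in (Fsupp r \<Lambda> A S) x"

lemma cent_iff: "y \<in> cent S x \<longleftrightarrow> y \<in> Fsupp r \<Lambda> A S \<and> y \<circ> x = x \<circ> y"
  unfolding cent_def centralizer_in_def by simp

lemma cent_comp: assumes "y \<in> cent S x" "z \<in> cent S x" shows "y \<circ> z \<in> cent S x"
proof -
  have y: "y \<in> Fsupp r \<Lambda> A S" "y \<circ> x = x \<circ> y" and z: "z \<in> Fsupp r \<Lambda> A S" "z \<circ> x = x \<circ> z"
    using assms cent_iff by auto
  have yx: "\<And>t. y (x t) = x (y t)" using y(2) by (simp add: fun_eq_iff)
  have zx: "\<And>t. z (x t) = x (z t)" using z(2) by (simp add: fun_eq_iff)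
  have "y (z (x t)) = x (y (z t))" for t by (simp only: yx zx)
  then have "(y \<circ> z) \<circ> x = x \<circ> (y \<circ> z)" by (simp add: fun_eq_iff)
  then show ?thesis using Fsupp_comp[OF y(1) z(1)] cent_iff by simp
qed

lemma cent_inv: assumes "y \<in> cent S x" shows "inv y \<in> cent S x"
proof -
  have yF: "y \<in> Fsupp r \<Lambda> A S" "y \<circ> x = x \<circ> y" using assms cent_iff by auto
  have "bij y" using F_bij[OF Fsupp_D(1)[OF yF(1)]] .
  then have "inv y \<circ> x = x \<circ> inv y" by (rule comm_inv[OF _ yF(2)])
  then show ?thesis using cent_iff Fsupp_inv[OF yF(1)] by simp
qed

lemma cent_funpow: assumes "y \<in> cent S x" shows "y ^^ n \<in> cent S x"
proof -
  have yF: "y \<in> Fsupp r \<Lambda> A S" "y \<circ> x = x \<circ> y" using assms cent_iff by auto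
  show ?thesis using cent_iff Fsupp_funpow[OF yF(1)] comm_funpow[OF yF(2)] by simp
qed

lemma cent_zpow: assumes "y \<in> cent S x" shows "zpow y n \<in> cent S x"
  unfolding zpow_def using cent_funpow[OF assms] cent_funpow[OF cent_inv[OF assms]] by simp

lemma Lt1: "\<exists>m\<in>\<Lambda>. 0 < m \<and> m < 1"
proof -
  have "\<exists>l\<in>\<Lambda>. l \<noteq> 1"
  proof (rule ccontr)
    assume "\<not> (\<exists>l\<in>\<Lambda>. l \<noteq> 1)"
    then have "\<Lambda> \<subseteq> {1}" by auto
    then have "\<Lambda> = {1}" using L1 by auto
    then show False using Lnt by simp
  qed
  then obtain l where l: "l \<in> \<Lambda>" "l \<noteq> 1" by auto
  have lp: "l > 0" using Lpos l by auto
  show ?thesis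
  proof (cases "l < 1")
    case True then show ?thesis using l lp by auto
  next
    case False
    then have "l > 1" using l by auto
    then have "inverse l < 1" "0 < inverse l" by (auto simp: inverse_less_1_iff)
    then show ?thesis using Linv[OF l(1)] by (intro bexI[of _ "inverse l"]) auto
  qed
qed

lemma A_nat_mult: assumes e: "e \<in> A" shows "real n * e \<in> A"
proof (induction n)
  case 0 then show ?case using A0 by simp
next
  case (Suc n)
  have "real n * e + e \<in> A" by (rule Aadd[OF Suc e])
  moreover have "real (Suc n) * e = real n * e + e" by (simp add: algebra_simps)
  ultimately show ?case by simp
qed

lemma A_int_mult: assumes e: "e \<in> A" shows "real_of_int k * e \<in> A"
proof (cases k rule: int_cases)
  case (nonneg n)
  then have eq: "real_of_int k * e = real n * e" by simp
  show ?thesis unfolding eq by (rule A_nat_mult[OF e])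
next
  case (neg n)
  then have kk: "real_of_int k = - real (Suc n)" by simp
  have eq: "real_of_int k * e = - (real (Suc n) * e)" by (simp only: kk mult_minus_left)
  show ?thesis unfolding eq by (rule Aneg[OF A_nat_mult[OF e]])
qed

lemma A_dense: assumes "a < b" shows "\<exists>q\<in>A. a < q \<and> q < b"
proof -
  obtain m where m: "m \<in> \<Lambda>" "0 < m" "m < 1" using Lt1 by blast
  have pw: "r * m ^ n \<in> A" for n
  proof (induction n)
    case 0 then show ?case using rA by simp
  next
    case (Suc n) then have "m * (r * m ^ n) \<in> A" using LA[OF m(1)] by blast
    then show ?case by (simp add: algebra_simps)
  qed
  obtain n where n: "m ^ n < (b - a) / r" using real_arch_pow_inv[of "(b - a) / r" m] assms m r_pos by auto
  define e where "e = r * m ^ n - r * m ^ Suc n"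
  have eA: "e \<in> A" unfolding e_def using Adiff pw by blast
  have e_eq: "e = r * m ^ n * (1 - m)" unfolding e_def by (simp add: algebra_simps)
  have epos: "e > 0" unfolding e_eq using m r_pos by auto
  have "r * m ^ n < b - a" using n r_pos by (simp add: field_simps)
  moreover have "e \<le> r * m ^ n" unfolding e_eq using m r_pos by (simp add: mult_left_le)
  ultimately have eb: "e < b - a" by simp
  define k where "k = \<lfloor>a / e\<rfloor> + 1"
  have "a / e < real_of_int k" unfolding k_def by linarith
  then have q1: "a < real_of_int k * e" using epos by (simp add: field_simps)
  have "real_of_int k \<le> a / e + 1" unfolding k_def by linarith
  then have "real_of_int k * e \<le> (a / e + 1) * e" using epos by (simp add: mult_right_mono)
  moreover have "(a / e + 1) * e = a + e" using epos by (simp add: field_simps)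
  ultimately have q2: "real_of_int k * e \<le> a + e" by simp
  show ?thesis using q1 q2 eb A_int_mult[OF eA, of k] by (intro bexI[of _ "real_of_int k * e"]) auto
qed

end

lemma cont_agree_left:
  fixes f g :: "real \<Rightarrow> real"
  assumes "isCont f p" "isCont g p" "a < p" "\<And>t. a < t \<Longrightarrow> t < p \<Longrightarrow> f t = g t"
  shows "f p = g p"
proof -
  have f: "(f \<longlongrightarrow> f p) (at_left p)" using assms(1) by (simp add: isCont_def filterlim_at_split)
  have g: "(g \<longlongrightarrow> g p) (at_left p)" using assms(2) by (simp add: isCont_def filterlim_at_split)
  have ev: "eventually (\<lambda>t. f t = g t) (at_left p)"
    using assms(3,4) eventually_at_left_real[OF assms(3)] by (auto elim: eventually_mono)
  have "(g \<longlongrightarrow> f p) (at_left p)" using tendsto_cong[OF ev] f by simp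
  then show ?thesis using g tendsto_unique[OF trivial_limit_at_left_real] by blast
qed

lemma cont_agree_right:
  fixes f g :: "real \<Rightarrow> real"
  assumes "isCont f p" "isCont g p" "p < b" "\<And>t. p < t \<Longrightarrow> t < b \<Longrightarrow> f t = g t"
  shows "f p = g p"
proof -
  have f: "(f \<longlongrightarrow> f p) (at_right p)" using assms(1) by (simp add: isCont_def filterlim_at_split)
  have g: "(g \<longlongrightarrow> g p) (at_right p)" using assms(2) by (simp add: isCont_def filterlim_at_split)
  have ev: "eventually (\<lambda>t. f t = g t) (at_right p)"
    using assms(3,4) eventually_at_right_real[OF assms(3)] by (auto elim: eventually_mono)
  have "(g \<longlongrightarrow> f p) (at_right p)" using tendsto_cong[OF ev] f by simp
  then show ?thesis using g tendsto_unique[OF trivial_limit_at_right_real] by blast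
qed

context adm
begin

lemma germ_right:
  assumes f: "f \<in> Fgrp r \<Lambda> A" and t: "t \<in> {0..<r}" and ft: "f t = t"
  shows "\<exists>e>0. \<exists>l\<in>\<Lambda>. \<forall>u\<in>{t..<t+e}. f u = t + l * (u - t)"
proof -
  obtain P where P: "brk f P" using F_D(4)[OF f] by auto
  obtain a b l c where abl: "consec P a b" "a \<le> t" "t < b" "l \<in> \<Lambda>" "\<forall>u\<in>{a..<b}. f u = l * u + c"
    using F_piece[OF f P t] by auto
  have c: "c = t - l * t" using abl ft by auto
  show ?thesis
  proof (intro exI[of _ "b - t"] conjI bexI[of _ l] ballI)
    show "b - t > 0" using abl by simp
    show "l \<in> \<Lambda>" using abl by simp
    fix u assume "u \<in> {t..<t + (b - t)}"
    then have "f u = l * u + c" using abl by auto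
    then show "f u = t + l * (u - t)" using c by (simp add: algebra_simps)
  qed
qed

lemma germ_left:
  assumes f: "f \<in> Fgrp r \<Lambda> A" and t: "0 < t" "t \<le> r" and ft: "f t = t"
  shows "\<exists>e>0. \<exists>l\<in>\<Lambda>. \<forall>u\<in>{t-e..t}. f u = t + l * (u - t)"
proof -
  obtain P where P: "brk f P" using F_D(4)[OF f] by auto
  have Pf: "finite P" "0 \<in> P" "P \<subseteq> A \<inter> {0..r}" using P unfolding brk_def by auto
  define a where "a = Max {q\<in>P. q < t}"
  have fa: "finite {q\<in>P. q < t}" "{q\<in>P. q < t} \<noteq> {}" using Pf t by auto
  have a: "a \<in> P" "a < t" using Max_in[OF fa] unfolding a_def by auto
  have amax: "\<And>q. q \<in> P \<Longrightarrow> q < t \<Longrightarrow> q \<le> a" unfolding a_def using fa by auto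
  define t0 where "t0 = (a + t) / 2"
  have t0: "a < t0" "t0 < t" unfolding t0_def using a by auto
  have a0: "0 \<le> a" using a Pf by auto
  have t0r: "t0 \<in> {0..<r}" using t0 a0 t by auto
  obtain a1 b1 l c where abl: "consec P a1 b1" "a1 \<le> t0" "t0 < b1" "l \<in> \<Lambda>" "\<forall>u\<in>{a1..<b1}. f u = l * u + c"
    using F_piece[OF f P t0r] by auto
  have a1P: "a1 \<in> P" "b1 \<in> P" using abl(1) unfolding consec_def by auto
  have "a1 \<le> a" using amax[OF a1P(1)] abl(2) t0 by simp
  have "t \<le> b1"
  proof (rule ccontr)
    assume "\<not> t \<le> b1" then have "b1 \<le> a" using amax[OF a1P(2)] by simp
    then show False using abl(3) t0 by simp
  qed
  have eq: "f u = l * u + c" if "t0 \<le> u" "u < t" for u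
    using abl(5) \<open>a1 \<le> a\<close> \<open>t \<le> b1\<close> that t0 abl(2) by auto
  have "f t = l * t + c"
    by (rule cont_agree_left[OF F_cont[OF f] _ t0(2)]) (use eq in auto)
  then have c: "c = t - l * t" using ft by simp
  show ?thesis
  proof (intro exI[of _ "t - t0"] conjI bexI[of _ l] ballI)
    show "t - t0 > 0" using t0 by simp
    show "l \<in> \<Lambda>" using abl by simp
    fix u assume u: "u \<in> {t - (t - t0)..t}"
    show "f u = t + l * (u - t)"
    proof (cases "u = t")
      case True then show ?thesis using ft by simp
    next
      case False
      then have "f u = l * u + c" using eq u by auto
      then show ?thesis using c by (simp add: algebra_simps)
    qed
  qed
qed

end

locale setting = adm +
  fixes \<alpha> \<beta> :: real and x :: "real \<Rightarrow> real"
  assumes al: "\<alpha> \<in> {0..r} \<inter> A" and be: "\<beta> \<in> {0..r} \<inter> A" and ab: "\<alpha> < \<beta>"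
    and xF: "x \<in> Fsupp r \<Lambda> A {\<alpha><..<\<beta>}"
    and xfix: "fixset r x \<inter> {\<alpha><..<\<beta>} \<inter> A = {}"
begin

abbreviation "I \<equiv> {\<alpha><..<\<beta>}"
abbreviation "C \<equiv> cent I x"

lemma alr: "\<alpha> < r" "0 \<le> \<alpha>" "\<beta> \<le> r" using al be ab by auto

lemma xFg: "x \<in> Fgrp r \<Lambda> A" using Fsupp_D(1)[OF xF] .

lemma C_F: "y \<in> C \<Longrightarrow> y \<in> Fgrp r \<Lambda> A" using cent_iff Fsupp_D(1) by blast

lemma C_comm: "y \<in> C \<Longrightarrow> y (x t) = x (y t)"
  using cent_iff[of y I x] by (auto simp: fun_eq_iff)

lemma x_in_C: "x \<in> C" using cent_iff xF by simp

lemma C_fix_out: "y \<in> C \<Longrightarrow> t \<notin> I \<Longrightarrow> y t = t"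
  using cent_iff Fsupp_out by blast

lemma C_alpha: "y \<in> C \<Longrightarrow> y \<alpha> = \<alpha>" using C_fix_out by simp
lemma C_beta: "y \<in> C \<Longrightarrow> y \<beta> = \<beta>" using C_fix_out by simp

lemma no_fixA: "t \<in> I \<Longrightarrow> x t = t \<Longrightarrow> t \<notin> A"
proof
  assume t: "t \<in> I" "x t = t" "t \<in> A"
  then have "t \<in> fixset r x" unfolding fixset_def using alr by auto
  then show False using xfix t by auto
qed

lemma C_germ: assumes "y \<in> C" shows "\<exists>e>0. \<exists>l\<in>\<Lambda>. \<forall>u\<in>{\<alpha>..<\<alpha>+e}. y u = \<alpha> + l * (u - \<alpha>)"
  using germ_right[OF C_F[OF assms] _ C_alpha[OF assms]] alr by auto

end


locale core = setting +
  fixes s \<delta> :: real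
  assumes dpos: "\<delta> > 0" and dle: "\<alpha> + \<delta> \<le> \<beta>" and s1: "s > 1"
    and xlin: "\<And>t. \<alpha> \<le> t \<Longrightarrow> t < \<alpha> + \<delta> \<Longrightarrow> x t = \<alpha> + s * (t - \<alpha>)"
begin

lemma x_cont: "isCont x t" using F_cont[OF xFg] .
lemma x_sm: "strict_mono x" using F_smono[OF xFg] .
lemma x_less: "x a < x b \<longleftrightarrow> a < b" using strict_mono_less[OF x_sm] .
lemma x_le: "x a \<le> x b \<longleftrightarrow> a \<le> b" using strict_mono_less_eq[OF x_sm] .

definition FP where "FP = {t \<in> {\<alpha>+\<delta>..\<beta>}. x t = t}"
definition p where "p = Inf FP"

lemma x_beta: "x \<beta> = \<beta>" using Fsupp_out[OF xF] by simp
lemma x_alpha: "x \<alpha> = \<alpha>" using Fsupp_out[OF xF] by simp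

lemma FP_closed: "closed FP"
proof -
  have "closed {t. x t = t}"
    by (rule closed_Collect_eq) (auto intro!: continuous_at_imp_continuous_on x_cont continuous_intros)
  moreover have "FP = {\<alpha>+\<delta>..\<beta>} \<inter> {t. x t = t}" unfolding FP_def by auto
  ultimately show ?thesis by auto
qed

lemma p_in: "p \<in> FP"
proof -
  have "\<beta> \<in> FP" unfolding FP_def using dle x_beta by auto
  then have "FP \<noteq> {}" by auto
  moreover have "bdd_below FP" unfolding FP_def by (auto intro: bdd_belowI[of _ "\<alpha>+\<delta>"])
  ultimately show ?thesis unfolding p_def using closed_contains_Inf FP_closed by blast
qed

lemma p_min: "t \<in> FP \<Longrightarrow> p \<le> t"
  unfolding p_def by (rule cInf_lower) (auto simp: FP_def intro: bdd_belowI[of _ "\<alpha>+\<delta>"])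

lemma p_props: "\<alpha> + \<delta> \<le> p" "p \<le> \<beta>" "x p = p" "\<alpha> < p" "p \<le> r" "0 < p"
  using p_in dpos alr unfolding FP_def by auto

lemma nofix: assumes "\<alpha> < t" "t < p" shows "x t \<noteq> t"
proof
  assume xt: "x t = t"
  show False
  proof (cases "t < \<alpha> + \<delta>")
    case True
    then have "x t = \<alpha> + s * (t - \<alpha>)" using xlin assms by simp
    then have "(s - 1) * (t - \<alpha>) = 0" using xt by (simp add: algebra_simps)
    then show False using s1 assms by simp
  next
    case False
    then have "t \<in> FP" unfolding FP_def using xt assms p_props by auto
    then show False using p_min assms by fastforce
  qed
qed

lemma x_gt: assumes "\<alpha> < t" "t < p" shows "x t > t"
proof (rule ccontr)
  assume "\<not> x t > t"
  then have lt: "x t < t" using nofix assms by fastforce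
  obtain m where m: "0 < m" "m < t - \<alpha>" "m < \<delta>" using field_lbound_gt_zero[of "t - \<alpha>" \<delta>] assms dpos by auto
  define t1 where "t1 = \<alpha> + m"
  have t1: "\<alpha> < t1" "t1 < t" "t1 < \<alpha> + \<delta>" unfolding t1_def using m by auto
  have "x t1 = \<alpha> + s * (t1 - \<alpha>)" using xlin t1 by simp
  moreover have "s * (t1 - \<alpha>) > t1 - \<alpha>" using s1 t1 by simp
  ultimately have g1: "x t1 - t1 > 0" by simp
  have "continuous_on {t1..t} (\<lambda>u. x u - u)"
    by (auto intro!: continuous_at_imp_continuous_on x_cont continuous_intros)
  then obtain c where c: "t1 \<le> c" "c \<le> t" "x c - c = 0"
    using IVT2'[of "\<lambda>u. x u - u" t 0 t1] g1 lt t1 by auto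
  then have "x c = c" by simp
  moreover have "c \<noteq> t" using lt c by auto
  ultimately show False using nofix[of c] c t1 assms by auto
qed

lemma x_into: assumes "\<alpha> < t" "t < p" shows "\<alpha> < x t" "x t < p"
proof -
  show "\<alpha> < x t" using x_gt assms by fastforce
  have "x t < x p" using assms x_less by simp
  then show "x t < p" using p_props by simp
qed

lemma xpow_into: assumes "\<alpha> < t" "t < p" shows "\<alpha> < (x ^^ n) t \<and> (x ^^ n) t < p"
  by (induction n) (use assms x_into in auto)

lemma xpow_mono: assumes "\<alpha> < t" "t < p" shows "t \<le> (x ^^ n) t"
proof (induction n)
  case 0 then show ?case by simp
next
  case (Suc n)
  have "(x ^^ n) t < x ((x ^^ n) t)" using x_gt xpow_into[OF assms] by blast
  then show ?case using Suc by simp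
qed

lemma xpow_sm: "strict_mono (x ^^ n)"
proof (induction n)
  case 0 then show ?case by (simp add: strict_mono_def)
next
  case (Suc n) then show ?case using x_sm by (simp add: strict_mono_def)
qed

lemma xpow_cont: "isCont (x ^^ n) t"
proof (induction n arbitrary: t)
  case 0 then show ?case by simp
next
  case (Suc n)
  have "isCont (\<lambda>u. x ((x ^^ n) u)) t" by (rule isCont_o2[OF Suc x_cont])
  then show ?case by (simp add: comp_def)
qed

lemma orbit_conv: assumes "\<alpha> < u" "u < p" "e > 0" shows "\<exists>N. (x ^^ N) u > p - e"
proof -
  define a where "a n = (x ^^ n) u" for n
  have inc: "incseq a"
  proof (rule incseq_SucI)
    fix n
    have "a n < x (a n)" unfolding a_def using x_gt xpow_into[OF assms(1,2)] by blast
    then show "a n \<le> a (Suc n)" unfolding a_def by simp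
  qed
  have bdd: "bdd_above (range a)"
    by (rule bdd_aboveI[of _ p]) (use xpow_into[OF assms(1,2)] in \<open>auto simp: a_def intro: less_imp_le\<close>)
  define L where "L = (SUP i. a i)"
  have lim: "a \<longlonglongrightarrow> L" unfolding L_def by (rule LIMSEQ_incseq_SUP[OF bdd inc])
  have Lp: "L \<le> p" unfolding L_def
  proof (rule cSUP_least)
    fix n show "a n \<le> p" unfolding a_def using xpow_into[OF assms(1,2), of n] by simp
  qed simp
  have Lu: "u \<le> L" unfolding L_def using cSUP_upper[OF _ bdd, of 0] a_def by auto
  have "(\<lambda>n. x (a n)) \<longlonglongrightarrow> x L" by (rule isCont_tendsto_compose[OF x_cont lim])
  moreover have "(\<lambda>n. x (a n)) = (\<lambda>n. a (Suc n))" unfolding a_def by auto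
  moreover have "(\<lambda>n. a (Suc n)) \<longlonglongrightarrow> L" using lim by (rule LIMSEQ_Suc)
  ultimately have "x L = L" using LIMSEQ_unique by metis
  then have "L = p" using nofix[of L] Lp Lu assms by fastforce
  then have "eventually (\<lambda>n. p - e < a n) sequentially" using lim assms(3) by (auto intro: order_tendstoD)
  then obtain N where "p - e < a N" by (auto simp: eventually_sequentially)
  then show ?thesis unfolding a_def by auto
qed

lemma xpow_alpha: "\<alpha> \<le> z \<Longrightarrow> s ^ n * (z - \<alpha>) < s * \<delta> \<Longrightarrow> (x ^^ n) z = \<alpha> + s ^ n * (z - \<alpha>)"
proof (induction n)
  case 0 then show ?case by simp
next
  case (Suc n)
  have "s ^ n * (z - \<alpha>) * s < s * \<delta>" using Suc.prems by (simp add: algebra_simps)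
  then have lt: "s ^ n * (z - \<alpha>) < \<delta>" using s1 by (simp add: mult.commute)
  have "s * \<delta> > \<delta>" using s1 dpos by simp
  then have IH: "(x ^^ n) z = \<alpha> + s ^ n * (z - \<alpha>)" using Suc lt by simp
  have nn: "0 \<le> s ^ n * (z - \<alpha>)" using s1 Suc.prems(1) by (intro mult_nonneg_nonneg) auto
  have X: "x (\<alpha> + s ^ n * (z - \<alpha>)) = \<alpha> + s * (s ^ n * (z - \<alpha>))" using xlin nn lt by simp
  have "(x ^^ Suc n) z = x ((x ^^ n) z)" by simp
  also have "\<dots> = \<alpha> + s * (s ^ n * (z - \<alpha>))" unfolding IH X ..
  finally show ?case by (simp add: algebra_simps)
qed

end

lemma affnear_comp:
  assumes g: "affnear g v" and f: "affnear f (g v)" shows "affnear (\<lambda>u. f (g u)) v"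
proof -
  obtain e1 a b where e1: "e1 > 0" "\<And>u. \<bar>u - v\<bar> < e1 \<Longrightarrow> g u = a * u + b" using g unfolding affnear_def by auto
  obtain e2 c d where e2: "e2 > 0" "\<And>w. \<bar>w - g v\<bar> < e2 \<Longrightarrow> f w = c * w + d" using f unfolding affnear_def by auto
  define e where "e = min e1 (e2 / (\<bar>a\<bar> + 1))"
  have epos: "e > 0" unfolding e_def using e1 e2 by (simp add: add_pos_nonneg)
  show ?thesis
  proof (rule affnearI[OF epos])
    fix u assume u: "\<bar>u - v\<bar> < e"
    then have u1: "\<bar>u - v\<bar> < e1" unfolding e_def by simp
    have gu: "g u = a * u + b" using e1(2)[OF u1] .
    have gv: "g v = a * v + b" using e1 by simp
    have "\<bar>g u - g v\<bar> = \<bar>a\<bar> * \<bar>u - v\<bar>" using gu gv by (simp add: abs_mult[symmetric] algebra_simps)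
    also have "\<dots> \<le> \<bar>a\<bar> * e" using u by (simp add: mult_left_mono)
    also have "\<dots> \<le> \<bar>a\<bar> * (e2 / (\<bar>a\<bar> + 1))" unfolding e_def by (intro mult_left_mono) auto
    also have "\<dots> < e2"
    proof -
      have "\<bar>a\<bar> * (e2 / (\<bar>a\<bar> + 1)) = e2 * (\<bar>a\<bar> / (\<bar>a\<bar> + 1))" by simp
      also have "\<dots> < e2 * 1" using e2 by (intro mult_strict_left_mono) auto
      finally show ?thesis by simp
    qed
    finally have "f (g u) = c * g u + d" using e2 by simp
    then show "f (g u) = (c * a) * u + (c * b + d)" using gu by (simp add: algebra_simps)
  qed
qed

lemma affnear_cancel:
  assumes h: "affnear (\<lambda>u. k (G u)) v" and G: "isCont G v" and eta: "\<eta> > 0"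
    and k: "\<And>w. \<bar>w - G v\<bar> < \<eta> \<Longrightarrow> k w = \<mu> * w + c" and mu: "\<mu> \<noteq> 0"
  shows "affnear G v"
proof -
  obtain e1 a b where e1: "e1 > 0" "\<And>u. \<bar>u - v\<bar> < e1 \<Longrightarrow> k (G u) = a * u + b" using h unfolding affnear_def by auto
  obtain e2 where e2: "e2 > 0" "\<And>u. dist u v < e2 \<Longrightarrow> dist (G u) (G v) < \<eta>"
    using G eta unfolding continuous_at_eps_delta by blast
  show ?thesis
  proof (rule affnearI[of "min e1 e2" _ _ "a / \<mu>" "(b - c) / \<mu>"])
    show "min e1 e2 > 0" using e1 e2 by simp
    fix u assume u: "\<bar>u - v\<bar> < min e1 e2"
    then have "dist (G u) (G v) < \<eta>" using e2 by (simp add: dist_real_def)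
    then have "k (G u) = \<mu> * G u + c" using k by (simp add: dist_real_def)
    moreover have "k (G u) = a * u + b" using e1 u by simp
    ultimately have "\<mu> * G u = a * u + b - c" by simp
    then have "G u = (a * u + b - c) / \<mu>" using mu by (simp add: nonzero_eq_divide_eq mult.commute)
    also have "\<dots> = a / \<mu> * u + (b - c) / \<mu>" by (simp add: add_divide_distrib diff_divide_distrib)
    finally show "G u = a / \<mu> * u + (b - c) / \<mu>" .
  qed
qed

definition nonaff :: "(real \<Rightarrow> real) \<Rightarrow> real set" where
  "nonaff f = {t. \<not> affnear f t}"

lemma nonaff_comp: "nonaff (\<lambda>u. f (g u)) \<subseteq> nonaff g \<union> g -` nonaff f"
  unfolding nonaff_def using affnear_comp by blast

context core
begin

lemma C_comm_pow: assumes y: "y \<in> C" shows "y ((x ^^ n) t) = (x ^^ n) (y t)"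
proof -
  have "\<And>t. x (y t) = y (x t)" using C_comm[OF y] by simp
  then show ?thesis using comm_funpow_pt[of x y n t] by simp
qed

lemma fix_ge_p: assumes "\<alpha> < t" "t \<le> \<beta>" "x t = t" shows "p \<le> t"
proof (cases "t < \<alpha> + \<delta>")
  case True
  then have "t < p" using p_props by simp
  then show ?thesis using nofix assms by auto
next
  case False then show ?thesis using p_min assms unfolding FP_def by auto
qed

lemma C_p: assumes y: "y \<in> C" shows "y p = p"
proof -
  have yF: "y \<in> Fgrp r \<Lambda> A" using C_F[OF y] .
  have sm: "strict_mono y" using F_smono[OF yF] .
  have "x (y p) = y (x p)" using C_comm[OF y] by simp
  then have fx: "x (y p) = y p" using p_props by simp
  have "y \<alpha> < y p" "y p \<le> y \<beta>" using sm p_props by (auto simp: strict_mono_less strict_mono_less_eq)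
  then have "\<alpha> < y p" "y p \<le> \<beta>" using C_alpha[OF y] C_beta[OF y] by auto
  then have ge: "p \<le> y p" using fix_ge_p fx by auto
  obtain q where q: "y q = p" using bij_is_surj[OF F_bij[OF yF]] by (metis surjD)
  have "y \<alpha> < y q" "y q \<le> y \<beta>" using q p_props C_alpha[OF y] C_beta[OF y] by auto
  then have qab: "\<alpha> < q" "q \<le> \<beta>" using sm by (auto simp: strict_mono_less strict_mono_less_eq)
  have "y (x q) = x (y q)" using C_comm[OF y] by simp
  also have "\<dots> = y q" using q p_props by simp
  finally have "x q = q" using strict_mono_eq[OF sm] by simp
  then have "p \<le> q" using fix_ge_p qab by auto
  then have "y p \<le> y q" using sm by (simp add: strict_mono_less_eq)
  then show ?thesis using ge q by simp
qed

lemma p_zone: "\<exists>dp s'. dp > 0 \<and> \<alpha> < p - dp \<and> 0 < s' \<and> s' < 1 \<and>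
   (\<forall>u. p - dp \<le> u \<longrightarrow> u \<le> p \<longrightarrow> x u = p + s' * (u - p))"
proof -
  obtain e l where e: "e > 0" "l \<in> \<Lambda>" "\<forall>u\<in>{p-e..p}. x u = p + l * (u - p)"
    using germ_left[OF xFg _ _ ] p_props by blast
  define dp where "dp = min e ((p - \<alpha>) / 2)"
  have dp: "dp > 0" "dp \<le> e" "dp \<le> (p - \<alpha>)/2" unfolding dp_def using e p_props
    min.cobounded1[of e "(p - \<alpha>)/2"] min.cobounded2[of e "(p - \<alpha>)/2"] by (auto simp del: min.cobounded1 min.cobounded2)
  have "2 * dp \<le> p - \<alpha>" using dp by simp
  then have ap: "\<alpha> < p - dp" using dp p_props by linarith
  have xl: "\<forall>u. p - dp \<le> u \<longrightarrow> u \<le> p \<longrightarrow> x u = p + l * (u - p)" using e dp by auto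
  define u where "u = p - dp"
  have "x u > u" using x_gt ap dp unfolding u_def by auto
  moreover have "x u = p + l * (u - p)" unfolding u_def by (rule xl[rule_format]) (use dp in auto)
  ultimately have "(1 - l) * dp > 0" unfolding u_def by (simp add: algebra_simps)
  then have "l < 1" using dp by (simp add: zero_less_mult_iff)
  moreover have "l > 0" using Lpos e by simp
  ultimately show ?thesis using dp ap xl by blast
qed

end

locale core2 = core +
  fixes dp s' :: real
  assumes dp: "dp > 0" "\<alpha> < p - dp" and s'1: "0 < s'" "s' < 1"
    and xp: "\<And>u. p - dp \<le> u \<Longrightarrow> u \<le> p \<Longrightarrow> x u = p + s' * (u - p)"
begin

lemma xpow_p: "p - dp \<le> z \<Longrightarrow> z \<le> p \<Longrightarrow> (x ^^ n) z = p + s' ^ n * (z - p)"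
proof (induction n)
  case 0 then show ?case by simp
next
  case (Suc n)
  have IH: "(x ^^ n) z = p + s' ^ n * (z - p)" using Suc by simp
  have sn: "0 < s' ^ n" "s' ^ n \<le> 1" using s'1 by (auto simp: power_le_one)
  have "s' ^ n * (p - z) \<le> 1 * (p - z)" using sn Suc.prems by (intro mult_right_mono) auto
  then have in1: "p - dp \<le> p + s' ^ n * (z - p)" using Suc.prems by (simp add: algebra_simps)
  have "0 \<le> s' ^ n * (p - z)" using sn Suc.prems by simp
  then have in2: "p + s' ^ n * (z - p) \<le> p" by (simp add: algebra_simps)
  have X: "x (p + s' ^ n * (z - p)) = p + s' * (s' ^ n * (z - p))" using xp[OF in1 in2] by simp
  have "(x ^^ Suc n) z = x ((x ^^ n) z)" by simp
  also have "\<dots> = p + s' * (s' ^ n * (z - p))" unfolding IH X ..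
  finally show ?case by (simp add: algebra_simps)
qed

lemma y_lin_alpha:
  assumes y: "y \<in> C" and e: "e > 0" and l: "0 < l" "l \<le> s"
    and yl: "\<And>u. \<alpha> \<le> u \<Longrightarrow> u < \<alpha> + e \<Longrightarrow> y u = \<alpha> + l * (u - \<alpha>)"
    and t: "\<alpha> \<le> t" "t < \<alpha> + \<delta>"
  shows "y t = \<alpha> + l * (t - \<alpha>)"
proof -
  obtain n where n: "(t - \<alpha>) / e < s ^ n" using real_arch_pow[OF s1] by blast
  have sn: "s ^ n > 0" using s1 by simp
  define z where "z = \<alpha> + (t - \<alpha>) / s ^ n"
  have z1: "\<alpha> \<le> z" unfolding z_def using t sn by simp
  have "(t - \<alpha>) / s ^ n < e" using n sn e by (simp add: field_simps)
  then have z2: "z < \<alpha> + e" unfolding z_def by simp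
  have zs: "s ^ n * (z - \<alpha>) = t - \<alpha>" unfolding z_def using sn s1 by simp
  have "t - \<alpha> < s * \<delta>" using t s1 dpos by (smt (verit) mult_less_cancel_right1)
  then have xz: "(x ^^ n) z = t" using xpow_alpha[OF z1] zs by simp
  have yz: "y z = \<alpha> + l * (z - \<alpha>)" using yl z1 z2 by simp
  have w1: "\<alpha> \<le> \<alpha> + l * (z - \<alpha>)" using l z1 by simp
  have "s ^ n * (\<alpha> + l * (z - \<alpha>) - \<alpha>) = l * (s ^ n * (z - \<alpha>))" by (simp add: algebra_simps)
  then have w2: "s ^ n * (\<alpha> + l * (z - \<alpha>) - \<alpha>) = l * (t - \<alpha>)" using zs by simp
  have "l * (t - \<alpha>) \<le> s * (t - \<alpha>)" using l t by (simp add: mult_right_mono)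
  also have "\<dots> < s * \<delta>" using s1 t by simp
  finally have "l * (t - \<alpha>) < s * \<delta>" .
  then have lt: "s ^ n * (\<alpha> + l * (z - \<alpha>) - \<alpha>) < s * \<delta>" unfolding w2 .
  have "(x ^^ n) (\<alpha> + l * (z - \<alpha>)) = \<alpha> + s ^ n * (\<alpha> + l * (z - \<alpha>) - \<alpha>)" by (rule xpow_alpha[OF w1 lt])
  then have "(x ^^ n) (\<alpha> + l * (z - \<alpha>)) = \<alpha> + l * (t - \<alpha>)" unfolding w2 .
  moreover have "y ((x ^^ n) z) = (x ^^ n) (y z)" using C_comm_pow[OF y] by simp
  ultimately show ?thesis using xz yz by simp
qed

lemma y_lin_p:
  assumes y: "y \<in> C" and e: "e > 0" and mu: "\<And>u. p - e \<le> u \<Longrightarrow> u \<le> p \<Longrightarrow> y u = p + \<mu> * (u - p)"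
    and w: "p - dp \<le> w" "w \<le> p" and yw: "p - dp \<le> y w" "y w \<le> p"
  shows "y w = p + \<mu> * (w - p)"
proof -
  obtain n where n: "s' ^ n < e / dp" using real_arch_pow_inv[of "e / dp" s'] e dp s'1 by auto
  have sn: "s' ^ n > 0" using s'1 by simp
  have "s' ^ n * (p - w) \<le> s' ^ n * dp" using w sn by (intro mult_left_mono) auto
  also have "\<dots> < e" using n dp by (simp add: field_simps)
  finally have "s' ^ n * (p - w) < e" .
  then have i1: "p - e \<le> p + s' ^ n * (w - p)" by (simp add: algebra_simps)
  have i2: "p + s' ^ n * (w - p) \<le> p" using sn w by (simp add: mult_nonneg_nonpos)
  have "y ((x ^^ n) w) = (x ^^ n) (y w)" using C_comm_pow[OF y] by simp
  then have "y (p + s' ^ n * (w - p)) = p + s' ^ n * (y w - p)" using xpow_p w yw by simp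
  then have "p + \<mu> * (s' ^ n * (w - p)) = p + s' ^ n * (y w - p)" using mu[OF i1 i2] by simp
  then have "s' ^ n * (\<mu> * (w - p)) = s' ^ n * (y w - p)" by (simp add: algebra_simps)
  then have "\<mu> * (w - p) = y w - p" using sn s'1 by simp
  then show ?thesis by simp
qed

lemma y_aff_p:
  assumes y: "y \<in> C" and w: "p - dp < w" "w < p" and yw: "p - dp < y w" "y w < p"
  shows "\<exists>\<eta>>0. \<exists>\<mu> c. \<mu> \<noteq> 0 \<and> (\<forall>u. \<bar>u - w\<bar> < \<eta> \<longrightarrow> y u = \<mu> * u + c)"
proof -
  have yF: "y \<in> Fgrp r \<Lambda> A" using C_F[OF y] .
  obtain e \<mu> where e: "e > 0" "\<mu> \<in> \<Lambda>" "\<forall>u\<in>{p-e..p}. y u = p + \<mu> * (u - p)"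
    using germ_left[OF yF _ _ C_p[OF y]] p_props by blast
  have mupos: "\<mu> > 0" using Lpos e by simp
  define h where "h = min (y w - (p - dp)) (p - y w)"
  have h: "h > 0" unfolding h_def using yw by simp
  obtain e2 where e2: "e2 > 0" "\<And>u. dist u w < e2 \<Longrightarrow> dist (y u) (y w) < h"
    using F_cont[OF yF, of w] h unfolding continuous_at_eps_delta by blast
  define \<eta> where "\<eta> = min e2 (min (w - (p - dp)) (p - w))"
  have eta: "\<eta> > 0" unfolding \<eta>_def using e2 w by simp
  have "\<forall>u. \<bar>u - w\<bar> < \<eta> \<longrightarrow> y u = \<mu> * u + (p - \<mu> * p)"
  proof (intro allI impI)
    fix u assume u: "\<bar>u - w\<bar> < \<eta>"
    then have "dist (y u) (y w) < h" using e2 unfolding \<eta>_def by (simp add: dist_real_def)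
    then have yu: "p - dp \<le> y u" "y u \<le> p" unfolding h_def dist_real_def by auto
    have uu: "p - dp \<le> u" "u \<le> p" using u unfolding \<eta>_def by auto
    have "y u = p + \<mu> * (u - p)" by (rule y_lin_p[OF y e(1) _ uu yu]) (use e in auto)
    then show "y u = \<mu> * u + (p - \<mu> * p)" by (simp add: algebra_simps)
  qed
  moreover have "\<mu> \<noteq> 0" using mupos by simp
  ultimately show ?thesis using eta by blast
qed

end


lemma aff_agree:
  fixes a b c d u1 u2 :: real
  assumes "u1 \<noteq> u2" "a * u1 + b = c * u1 + d" "a * u2 + b = c * u2 + d"
  shows "a = c" "b = d"
proof -
  have "(a - c) * (u1 - u2) = 0" using assms by (simp add: algebra_simps)
  then show "a = c" using assms(1) by simp
  then show "b = d" using assms(2) by simp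
qed

context setting
begin

lemma x_bij: "bij x" using F_bij[OF xFg] .
lemma x_inv1: "x (inv x t) = t" using bij_is_surj[OF x_bij] by (simp add: surj_f_inv_f)
lemma x_inv2: "inv x (x t) = t" using bij_is_inj[OF x_bij] by (simp add: inv_f_f)
lemma x_smono: "strict_mono x" using F_smono[OF xFg] .
lemma xs_less: "x a < x b \<longleftrightarrow> a < b" using strict_mono_less[OF x_smono] .
lemma xs_le: "x a \<le> x b \<longleftrightarrow> a \<le> b" using strict_mono_less_eq[OF x_smono] .
lemma x_al: "x \<alpha> = \<alpha>" using Fsupp_out[OF xF] by simp

lemma C_inj:
  assumes y: "y \<in> C" and z: "z \<in> C" and e: "e > 0" and agree: "\<And>u. \<alpha> \<le> u \<Longrightarrow> u < \<alpha> + e \<Longrightarrow> y u = z u"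
  shows "y = z"
proof -
  have yF: "y \<in> Fgrp r \<Lambda> A" and zF: "z \<in> Fgrp r \<Lambda> A" using C_F y z by auto
  define D where "D = {t \<in> {\<alpha>..\<beta>}. \<forall>u\<in>{\<alpha>..t}. y u = z u}"
  define t0 where "t0 = min (\<alpha> + e / 2) \<beta>"
  have t0: "\<alpha> < t0" "t0 \<le> \<beta>" "t0 < \<alpha> + e" unfolding t0_def using e ab by auto
  have t0D: "t0 \<in> D" unfolding D_def using t0 agree by auto
  have bdd: "bdd_above D" unfolding D_def by (auto intro: bdd_aboveI[of _ \<beta>])
  define T where "T = Sup D"
  have T1: "t0 \<le> T" unfolding T_def by (rule cSup_upper[OF t0D bdd])
  have T2: "T \<le> \<beta>" unfolding T_def using t0D by (intro cSup_least) (auto simp: D_def)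
  have below: "y u = z u" if "\<alpha> \<le> u" "u < T" for u
  proof -
    have "D \<noteq> {}" using t0D by auto
    moreover have "u < Sup D" using that unfolding T_def by simp
    ultimately obtain t where t: "t \<in> D" "u < t" using less_cSupD[of D u] by blast
    then show ?thesis using that unfolding D_def by auto
  qed
  have atT: "y T = z T"
    by (rule cont_agree_left[OF F_cont[OF yF] F_cont[OF zF], of \<alpha>]) (use T1 t0 below in auto)
  have TD: "T \<in> D" unfolding D_def using T1 T2 t0 below atT by (auto simp: le_less)
  have ext: False if T': "T < T'" "T' \<le> \<beta>" "\<And>u. T < u \<Longrightarrow> u \<le> T' \<Longrightarrow> y u = z u" for T'
  proof -
    have "\<forall>u\<in>{\<alpha>..T'}. y u = z u"
    proof
      fix u assume u: "u \<in> {\<alpha>..T'}"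
      consider "u < T" | "u = T" | "T < u" by linarith
      then show "y u = z u"
      proof cases
        case 1 then show ?thesis using below u by auto
      next
        case 2 then show ?thesis using atT by simp
      next
        case 3 then show ?thesis using T'(3) u by auto
      qed
    qed
    then have "T' \<in> D" unfolding D_def using T' T1 t0 by auto
    then have "T' \<le> T" unfolding T_def by (rule cSup_upper[OF _ bdd])
    then show False using T' by simp
  qed
  have Tb: "T = \<beta>"
  proof (rule ccontr)
    assume "T \<noteq> \<beta>" then have Tb: "T < \<beta>" using T2 by simp
    have Ta: "\<alpha> < T" using T1 t0 by simp
    consider "x T > T" | "x T < T" | "x T = T" by linarith
    then show False
    proof cases
      case 1
      show False
      proof (rule ext[of "min (x T) \<beta>"])
        show "T < min (x T) \<beta>" using 1 Tb by simp
        show "min (x T) \<beta> \<le> \<beta>" by simp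
        fix u assume u: "T < u" "u \<le> min (x T) \<beta>"
        define v where "v = inv x u"
        have xv: "x v = u" unfolding v_def by (rule x_inv1)
        have "v \<le> T" using u xv xs_le[of v T] by simp
        moreover have "\<alpha> \<le> v" using u Ta xv xs_le[of \<alpha> v] x_al by simp
        ultimately have "y v = z v" using below atT by (cases "v = T") auto
        then have "x (y v) = x (z v)" by simp
        then have "y (x v) = z (x v)" using C_comm[OF y] C_comm[OF z] by simp
        then show "y u = z u" using xv by simp
      qed
    next
      case 2
      define T' where "T' = min (inv x T) \<beta>"
      have "T < inv x T" using 2 x_inv1[of T] xs_less[of T "inv x T"] by simp
      show False
      proof (rule ext[of T'])
        show "T < T'" unfolding T'_def using \<open>T < inv x T\<close> Tb by simp
        show "T' \<le> \<beta>" unfolding T'_def by simp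
        fix u assume u: "T < u" "u \<le> T'"
        have "x u \<le> x (inv x T)" using u unfolding T'_def by (simp add: xs_le)
        then have "x u \<le> T" using x_inv1 by simp
        moreover have "\<alpha> \<le> x u" using u Ta x_al xs_le[of \<alpha> u] by simp
        ultimately have "y (x u) = z (x u)" using below atT by (cases "x u = T") auto
        then have "x (y u) = x (z u)" using C_comm[OF y] C_comm[OF z] by simp
        then have "inv x (x (y u)) = inv x (x (z u))" by simp
        then show "y u = z u" by (simp only: x_inv2)
      qed
    next
      case 3
      have TI: "T \<in> I" using Ta Tb by simp
      have "T \<notin> A" using no_fixA[OF TI 3] .
      obtain Py where Py: "brk y Py" using F_D(4)[OF yF] by auto
      obtain Pz where Pz: "brk z Pz" using F_D(4)[OF zF] by auto
      have "T \<notin> Py" "T \<notin> Pz" using Py Pz \<open>T \<notin> A\<close> unfolding brk_def by auto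
      then have "affnear y T" "affnear z T" using affnear_notP yF zF Py Pz by auto
      obtain e1 a b where e1: "e1 > 0" "\<And>u. \<bar>u - T\<bar> < e1 \<Longrightarrow> y u = a * u + b"
        using \<open>affnear y T\<close> unfolding affnear_def by blast
      obtain e2 c d where e2: "e2 > 0" "\<And>u. \<bar>u - T\<bar> < e2 \<Longrightarrow> z u = c * u + d"
        using \<open>affnear z T\<close> unfolding affnear_def by blast
      define m where "m = min (min e1 e2) (T - \<alpha>) / 2"
      have m: "0 < m" "m < e1" "m < e2" "m \<le> T - \<alpha>"
        unfolding m_def using e1 e2 Ta by auto
      have ag: "a * u + b = c * u + d" if "u = T - m \<or> u = T - m / 2" for u
      proof -
        have "\<bar>u - T\<bar> < e1" "\<bar>u - T\<bar> < e2" using that m by auto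
        moreover have "y u = z u" using that m by (intro below) auto
        ultimately show ?thesis using e1(2) e2(2) by simp
      qed
      have ac: "a = c" "b = d" using aff_agree[of "T - m" "T - m/2" a b c d] ag m by auto
      define e3 where "e3 = min e1 e2"
      show False
      proof (rule ext[of "min (T + e3 / 2) \<beta>"])
        show "T < min (T + e3 / 2) \<beta>" unfolding e3_def using Tb e1 e2 by simp
        show "min (T + e3 / 2) \<beta> \<le> \<beta>" by simp
        fix u assume u: "T < u" "u \<le> min (T + e3 / 2) \<beta>"
        then have "\<bar>u - T\<bar> < e1" "\<bar>u - T\<bar> < e2" unfolding e3_def using e1 e2 by auto
        then show "y u = z u" using e1(2) e2(2) ac by simp
      qed
    qed
  qed
  show "y = z"
  proof
    fix t show "y t = z t"
    proof (cases "t \<in> I")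
      case True then show ?thesis using TD Tb unfolding D_def by auto
    next
      case False then show ?thesis using C_fix_out[OF y False] C_fix_out[OF z False] by simp
    qed
  qed
qed

definition rho :: "(real \<Rightarrow> real) \<Rightarrow> real" where
  "rho y = (SOME l. l \<in> \<Lambda> \<and> (\<exists>e>0. \<forall>u\<in>{\<alpha>..<\<alpha>+e}. y u = \<alpha> + l * (u - \<alpha>)))"

lemma rho_spec: assumes "y \<in> C" shows "rho y \<in> \<Lambda>" "\<exists>e>0. \<forall>u\<in>{\<alpha>..<\<alpha>+e}. y u = \<alpha> + rho y * (u - \<alpha>)"
proof -
  have "\<exists>l. l \<in> \<Lambda> \<and> (\<exists>e>0. \<forall>u\<in>{\<alpha>..<\<alpha>+e}. y u = \<alpha> + l * (u - \<alpha>))" using C_germ[OF assms] by blast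
  then have "rho y \<in> \<Lambda> \<and> (\<exists>e>0. \<forall>u\<in>{\<alpha>..<\<alpha>+e}. y u = \<alpha> + rho y * (u - \<alpha>))"
    unfolding rho_def by (rule someI_ex)
  then show "rho y \<in> \<Lambda>" "\<exists>e>0. \<forall>u\<in>{\<alpha>..<\<alpha>+e}. y u = \<alpha> + rho y * (u - \<alpha>)" by auto
qed

lemma rho_pos: "y \<in> C \<Longrightarrow> rho y > 0" using rho_spec Lpos by blast

lemma rho_unique:
  assumes y: "y \<in> C" and e: "e > 0" and l: "\<And>u. \<alpha> \<le> u \<Longrightarrow> u < \<alpha> + e \<Longrightarrow> y u = \<alpha> + l * (u - \<alpha>)"
  shows "rho y = l"
proof -
  obtain e' where e': "e' > 0" "\<forall>u\<in>{\<alpha>..<\<alpha>+e'}. y u = \<alpha> + rho y * (u - \<alpha>)" using rho_spec[OF y] by blast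
  define u where "u = \<alpha> + min e e' / 2"
  have u: "\<alpha> \<le> u" "u < \<alpha> + e" "u < \<alpha> + e'" "u \<noteq> \<alpha>" unfolding u_def using e e' by auto
  have "y u = \<alpha> + rho y * (u - \<alpha>)" using e'(2) u by simp
  moreover have "y u = \<alpha> + l * (u - \<alpha>)" by (rule l) (use u in auto)
  ultimately have "rho y * (u - \<alpha>) = l * (u - \<alpha>)" by linarith
  then have "(rho y - l) * (u - \<alpha>) = 0" by (simp add: algebra_simps)
  then have "rho y - l = 0" using u(4) by simp
  then show ?thesis by simp
qed

lemma rho_inj: assumes "y \<in> C" "z \<in> C" "rho y = rho z" shows "y = z"
proof -
  obtain e1 where e1: "e1 > 0" "\<forall>u\<in>{\<alpha>..<\<alpha>+e1}. y u = \<alpha> + rho y * (u - \<alpha>)" using rho_spec[OF assms(1)] by blast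
  obtain e2 where e2: "e2 > 0" "\<forall>u\<in>{\<alpha>..<\<alpha>+e2}. z u = \<alpha> + rho z * (u - \<alpha>)" using rho_spec[OF assms(2)] by blast
  show ?thesis
    by (rule C_inj[OF assms(1,2), of "min e1 e2"]) (use e1 e2 assms(3) in auto)
qed

lemma rho_comp: assumes y: "y \<in> C" and z: "z \<in> C" shows "rho (y \<circ> z) = rho y * rho z"
proof -
  obtain e1 where e1: "e1 > 0" "\<forall>u\<in>{\<alpha>..<\<alpha>+e1}. y u = \<alpha> + rho y * (u - \<alpha>)" using rho_spec[OF y] by blast
  obtain e2 where e2: "e2 > 0" "\<forall>u\<in>{\<alpha>..<\<alpha>+e2}. z u = \<alpha> + rho z * (u - \<alpha>)" using rho_spec[OF z] by blast
  have zp: "rho z > 0" using rho_pos[OF z] .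
  define e where "e = min e2 (e1 / rho z)"
  have epos: "e > 0" unfolding e_def using e1 e2 zp by simp
  show ?thesis
  proof (rule rho_unique[OF cent_comp[OF y z] epos])
    fix u assume u: "\<alpha> \<le> u" "u < \<alpha> + e"
    then have zu: "z u = \<alpha> + rho z * (u - \<alpha>)" using e2 unfolding e_def by auto
    have "rho z * (u - \<alpha>) < rho z * (e1 / rho z)" using u zp unfolding e_def by (intro mult_strict_left_mono) auto
    then have "rho z * (u - \<alpha>) < e1" using zp by simp
    moreover have "0 \<le> rho z * (u - \<alpha>)" using zp u by simp
    ultimately have "y (z u) = \<alpha> + rho y * (rho z * (u - \<alpha>))" using e1 zu by auto
    then show "(y \<circ> z) u = \<alpha> + rho y * rho z * (u - \<alpha>)" by (simp add: algebra_simps)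
  qed
qed

lemma rho_id: "rho id = 1"
proof -
  have "id \<in> C" using cent_iff Fsupp_id by auto
  then show ?thesis by (rule rho_unique[of _ 1]) auto
qed

lemma rho_inv: assumes y: "y \<in> C" shows "rho (inv y) = inverse (rho y)"
proof -
  have "y \<circ> inv y = id" using bij_is_surj[OF F_bij[OF C_F[OF y]]] by (simp add: surj_iff)
  then have "rho y * rho (inv y) = 1" using rho_comp[OF y cent_inv[OF y]] rho_id by simp
  then show ?thesis using rho_pos[OF y] by (simp add: inverse_eq_divide field_simps)
qed

lemma rho_funpow: assumes y: "y \<in> C" shows "rho (y ^^ n) = rho y ^ n"
proof (induction n)
  case 0 show ?case using rho_id by (simp add: id_def)
next
  case (Suc n)
  have eq: "y ^^ Suc n = y \<circ> y ^^ n" by (rule funpow.simps(2))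
  have "rho (y ^^ Suc n) = rho y * rho (y ^^ n)" unfolding eq by (rule rho_comp[OF y cent_funpow[OF y]])
  then show ?case by (simp only: Suc power_Suc)
qed

lemma rho_zpow: assumes y: "y \<in> C" shows "rho (zpow y n) = rho y powr real_of_int n"
proof (cases "0 \<le> n")
  case True
  have z: "zpow y n = y ^^ nat n" unfolding zpow_def using True by simp
  have n: "real_of_int n = real (nat n)" using True by simp
  have "rho (zpow y n) = rho y ^ nat n" unfolding z by (rule rho_funpow[OF y])
  also have "\<dots> = rho y powr real (nat n)" using rho_pos[OF y] by (rule powr_realpow[symmetric])
  finally show ?thesis unfolding n .
next
  case False
  have z: "zpow y n = inv y ^^ nat (- n)" unfolding zpow_def using False by simp
  have "rho (zpow y n) = rho (inv y) ^ nat (- n)" unfolding z by (rule rho_funpow[OF cent_inv[OF y]])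
  also have "\<dots> = inverse (rho y ^ nat (- n))" using rho_inv[OF y] by (simp add: power_inverse)
  also have "\<dots> = rho y powr real_of_int n"
  proof -
    have n: "real_of_int n = - real (nat (- n))" using False by simp
    have "rho y powr real_of_int n = inverse (rho y powr real (nat (- n)))"
      unfolding n by (rule powr_minus)
    also have "rho y powr real (nat (- n)) = rho y ^ nat (- n)" using rho_pos[OF y] by (rule powr_realpow)
    finally show ?thesis by simp
  qed
  finally show ?thesis .
qed

end

context core
begin
lemma rho_x: "rho x = s"
  by (rule rho_unique[OF x_in_C dpos]) (use xlin in auto)
end


lemma slope_unique:
  fixes G :: "real \<Rightarrow> real"
  assumes e: "e > 0" "\<And>u. \<bar>u - v\<bar> < e \<Longrightarrow> G u = a * u + b"
    and e': "e' > 0" "\<And>u. \<bar>u - w\<bar> < e' \<Longrightarrow> G u = a' * u + b'"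
    and wv: "\<bar>w - v\<bar> < e"
  shows "a = a'"
proof -
  define m where "m = min e' (e - \<bar>w - v\<bar>)"
  have pos2: "e - \<bar>w - v\<bar> > 0" using wv by simp
  have m: "m > 0" "m \<le> e'" "m \<le> e - \<bar>w - v\<bar>" unfolding m_def using e'(1) pos2 by simp_all
  have p1: "a * w + b = a' * w + b'" using e(2)[of w] e'(2)[of w] wv e' by simp
  have "\<bar>(w - v) + m / 2\<bar> \<le> \<bar>w - v\<bar> + \<bar>m / 2\<bar>" by (rule abs_triangle_ineq)
  then have "\<bar>w + m / 2 - v\<bar> < e" using m by (simp add: algebra_simps)
  moreover have "\<bar>w + m / 2 - w\<bar> < e'" using m by simp
  ultimately have p2: "a * (w + m/2) + b = a' * (w + m/2) + b'" using e(2)[of "w + m/2"] e'(2)[of "w + m/2"] by simp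
  show ?thesis using aff_agree[OF _ p1 p2] m by simp
qed

definition sigma :: "(real \<Rightarrow> real) \<Rightarrow> real \<Rightarrow> real" where
  "sigma G v = (SOME a. \<exists>e>0. \<exists>b. \<forall>u. \<bar>u - v\<bar> < e \<longrightarrow> G u = a * u + b)"

lemma sigma_spec: fixes G :: "real \<Rightarrow> real" assumes "affnear G v" shows "\<exists>e>0. \<exists>b. \<forall>u. \<bar>u - v\<bar> < e \<longrightarrow> G u = sigma G v * u + b"
proof -
  have "\<exists>a. \<exists>e>0. \<exists>b. \<forall>u. \<bar>u - v\<bar> < e \<longrightarrow> G u = a * u + b" using assms unfolding affnear_def by blast
  then show ?thesis unfolding sigma_def by (rule someI_ex)
qed

lemma sigma_eq: fixes G :: "real \<Rightarrow> real" assumes "e > 0" "\<And>u. \<bar>u - v\<bar> < e \<Longrightarrow> G u = a * u + b" shows "sigma G v = a"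
proof -
  have "affnear G v" unfolding affnear_def using assms by blast
  then obtain e' b' where e': "e' > 0" "\<forall>u. \<bar>u - v\<bar> < e' \<longrightarrow> G u = sigma G v * u + b'"
    using sigma_spec by blast
  show ?thesis using slope_unique[of e v G a b e' v "sigma G v" b'] assms e' by simp
qed

lemma sigma_loc: fixes G :: "real \<Rightarrow> real" assumes "affnear G v" shows "\<exists>e>0. \<forall>w. \<bar>w - v\<bar> < e \<longrightarrow> sigma G w = sigma G v"
proof -
  obtain e b where e: "e > 0" "\<forall>u. \<bar>u - v\<bar> < e \<longrightarrow> G u = sigma G v * u + b" using sigma_spec[OF assms] by blast
  have "sigma G w = sigma G v" if w: "\<bar>w - v\<bar> < e" for w
  proof (rule sigma_eq[of "e - \<bar>w - v\<bar>" _ _ _ b])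
    show "e - \<bar>w - v\<bar> > 0" using w by simp
    fix u assume "\<bar>u - w\<bar> < e - \<bar>w - v\<bar>"
    then have "\<bar>u - v\<bar> < e" by (auto simp: abs_if split: if_splits)
    then show "G u = sigma G v * u + b" using e by simp
  qed
  then show ?thesis using e by blast
qed

context core2
begin

definition u0 where "u0 = \<alpha> + \<delta> / s ^ 3"

lemma s_pos: "s > 0" using s1 by simp

lemma u0_props: "\<alpha> < u0" "u0 < \<alpha> + \<delta> / s ^ 2" "\<alpha> + \<delta> / s ^ 2 < \<alpha> + \<delta> / s" "\<alpha> + \<delta> / s < \<alpha> + \<delta>"
  "\<alpha> + \<delta> \<le> p" "x u0 = \<alpha> + \<delta> / s ^ 2"
proof -
  show "\<alpha> < u0" unfolding u0_def using dpos s1 by simp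
  have "\<delta> / s ^ 3 < \<delta> / s ^ 2" using dpos s1 by (intro divide_strict_left_mono) (auto simp: power_strict_increasing)
  then show "u0 < \<alpha> + \<delta> / s ^ 2" unfolding u0_def by simp
  have "\<delta> / s ^ 2 < \<delta> / s" using dpos s1 by (intro divide_strict_left_mono) (auto simp: power2_eq_square)
  then show "\<alpha> + \<delta> / s ^ 2 < \<alpha> + \<delta> / s" by simp
  have "\<delta> / s < \<delta>" using dpos s1 by (simp add: divide_less_eq)
  then show "\<alpha> + \<delta> / s < \<alpha> + \<delta>" by simp
  show "\<alpha> + \<delta> \<le> p" using p_props by simp
  have "\<delta> / s ^ 3 < \<delta>" using dpos s1 by (simp add: divide_less_eq)
  then have "x u0 = \<alpha> + s * (u0 - \<alpha>)" using xlin u0_def dpos s1 by simp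
  also have "\<dots> = \<alpha> + \<delta> / s ^ 2" unfolding u0_def using s1 by (simp add: power3_eq_cube power2_eq_square)
  finally show "x u0 = \<alpha> + \<delta> / s ^ 2" .
qed

definition Nn where "Nn = (SOME N. p - dp < (x ^^ N) u0)"
definition G where "G = x ^^ Nn"

lemma Nn: "p - dp < (x ^^ Nn) u0"
proof -
  have "\<exists>N. (x ^^ N) u0 > p - dp" using orbit_conv[of u0 dp] u0_props dp by auto
  then show ?thesis unfolding Nn_def by (rule someI_ex)
qed

lemma G_range: assumes "u0 \<le> v" "v \<le> \<alpha> + \<delta> / s" shows "p - dp < G v" "G v < p"
proof -
  have "(x ^^ Nn) u0 \<le> (x ^^ Nn) v" using assms xpow_sm by (simp add: strict_mono_less_eq)
  then show "p - dp < G v" using Nn unfolding G_def by simp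
  have "\<alpha> < v" "v < p" using assms u0_props by linarith+
  then show "G v < p" unfolding G_def using xpow_into by blast
qed

lemma G_comm_x: "G (x t) = x (G t)" unfolding G_def by (simp add: funpow_swap1)

lemma G_comm_y: "y \<in> C \<Longrightarrow> G (y t) = y (G t)" unfolding G_def using C_comm_pow by simp

lemma G_sm: "strict_mono G" unfolding G_def by (rule xpow_sm)
lemma G_cont: "isCont G t" unfolding G_def by (rule xpow_cont)

lemma nonaff_xpow_finite: "finite (nonaff (x ^^ n))"
proof (induction n)
  case 0
  have "affnear (x ^^ 0) t" for t by (rule affnearI[of 1 _ _ 1 0]) auto
  then show ?case unfolding nonaff_def by simp
next
  case (Suc n)
  obtain P where P: "brk x P" using F_D(4)[OF xFg] by auto
  have fP: "finite P" using P unfolding brk_def by auto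
  have "nonaff x \<subseteq> P" unfolding nonaff_def using affnear_notP[OF xFg P] by auto
  then have fx: "finite (nonaff x)" using fP finite_subset by auto
  have inj: "inj (x ^^ n)" using xpow_sm strict_mono_imp_inj_on by auto
  have eq: "x ^^ Suc n = (\<lambda>u. x ((x ^^ n) u))" by (simp add: fun_eq_iff)
  have sub: "nonaff (x ^^ Suc n) \<subseteq> nonaff (x ^^ n) \<union> (x ^^ n) -` nonaff x"
    unfolding eq by (rule nonaff_comp)
  have fin: "finite (nonaff (x ^^ n) \<union> (x ^^ n) -` nonaff x)"
    using Suc finite_vimageI[OF fx inj] by simp
  show ?case by (rule finite_subset[OF sub fin])
qed

lemma G_nonaff_finite: "finite (nonaff G)" unfolding G_def by (rule nonaff_xpow_finite)

lemma exists_v0: "\<exists>v0. u0 \<le> v0 \<and> v0 \<le> x u0 \<and> \<not> affnear G v0"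
proof (rule ccontr)
  assume "\<not> ?thesis"
  then have aff: "\<And>v. u0 \<le> v \<Longrightarrow> v \<le> x u0 \<Longrightarrow> affnear G v" by blast
  have ux: "u0 < x u0" using u0_props by simp
  have ev: "\<forall>a\<in>{u0..x u0}. eventually (\<lambda>b. sigma G a = sigma G b) (at a within {u0..x u0})"
    proof
      fix a assume "a \<in> {u0..x u0}"
      then have "affnear G a" using aff by simp
      then obtain e where e: "e > 0" "\<forall>w. \<bar>w - a\<bar> < e \<longrightarrow> sigma G w = sigma G a"
        using sigma_loc by blast
      show "eventually (\<lambda>b. sigma G a = sigma G b) (at a within {u0..x u0})"
        unfolding eventually_at
      proof (rule exI[of _ e], intro conjI ballI impI)
        show "e > 0" by (rule e(1))
        fix b assume "b \<noteq> a \<and> dist b a < e"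
        then have "\<bar>b - a\<bar> < e" by (simp add: dist_real_def)
        then have "sigma G b = sigma G a" using e(2) by blast
        then show "sigma G a = sigma G b" by simp
      qed
    qed
  have sig: "sigma G u0 = sigma G (x u0)"
    by (rule connected_local_const[OF _ _ _ ev]) (use ux in auto)
  define \<sigma> where "\<sigma> = sigma G u0"
  have a0: "affnear G u0" using aff ux by simp
  have a1: "affnear G (x u0)" using aff ux by simp
  obtain e0 b0 where e0: "e0 > 0" "\<forall>u. \<bar>u - u0\<bar> < e0 \<longrightarrow> G u = \<sigma> * u + b0"
    using sigma_spec[OF a0] unfolding \<sigma>_def by blast
  obtain e1 b1 where e1: "e1 > 0" "\<forall>u. \<bar>u - x u0\<bar> < e1 \<longrightarrow> G u = \<sigma> * u + b1"
    using sigma_spec[OF a1] unfolding \<sigma>_def sig by blast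
  define \<eta> where "\<eta> = min (min e0 (e1 / s)) (x u0 - u0)"
  have e1s: "e1 / s > 0" using e1 s1 by simp
  have ux0: "x u0 - u0 > 0" using ux by simp
  have eta: "\<eta> > 0" "\<eta> \<le> e0" "\<eta> \<le> e1 / s" "\<eta> \<le> x u0 - u0" unfolding \<eta>_def using e0(1) e1s ux0 by simp_all
  have key: "\<sigma> * s * t + (\<sigma> * (\<alpha> - s * \<alpha>) + b1) = (s' * \<sigma>) * t + (p + s' * (b0 - p))"
    if t: "u0 < t" "t < u0 + \<eta>" for t
  proof -
    have tx: "t \<le> x u0" using t eta by simp
    have xt: "x t = \<alpha> + s * (t - \<alpha>)" using xlin t tx u0_props by simp
    have "x t - x u0 = s * (t - u0)" using xt u0_props xlin[of u0] by (simp add: algebra_simps)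
    moreover have "s * (t - u0) < e1"
    proof -
      have "s * (t - u0) < s * (e1 / s)" using t eta s1 by (intro mult_strict_left_mono) auto
      then show ?thesis using s1 by simp
    qed
    ultimately have "\<bar>x t - x u0\<bar> < e1" using t s1 by simp
    then have Gx: "G (x t) = \<sigma> * (x t) + b1" using e1 by simp
    have Gt: "G t = \<sigma> * t + b0" using e0 t eta by simp
    have "p - dp < G t" "G t < p" using G_range[of t] t tx u0_props by auto
    then have "x (G t) = p + s' * (G t - p)" using xp by simp
    then have "\<sigma> * (x t) + b1 = p + s' * (\<sigma> * t + b0 - p)" using G_comm_x Gx Gt by simp
    then show ?thesis unfolding xt by (simp add: algebra_simps)
  qed
  have "\<sigma> * s = s' * \<sigma>"
    by (rule aff_agree(1)[of "u0 + \<eta>/2" "u0 + \<eta>/4" "\<sigma> * s" "\<sigma> * (\<alpha> - s * \<alpha>) + b1" "s' * \<sigma>" "p + s' * (b0 - p)"])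
       (use eta key[of "u0 + \<eta>/2"] key[of "u0 + \<eta>/4"] in auto)
  moreover have "\<sigma> \<noteq> 0"
  proof
    assume "\<sigma> = 0"
    then have "G (u0 + \<eta>/4) = G (u0 + \<eta>/2)" using e0 eta by simp
    moreover have "G (u0 + \<eta>/4) < G (u0 + \<eta>/2)" using G_sm eta by (simp add: strict_mono_less)
    ultimately show False by simp
  qed
  ultimately have "s = s'" by simp
  then show False using s1 s'1 by simp
qed

end

context core2
begin

definition S where "S = nonaff G \<inter> {u0..\<alpha> + \<delta> / s}"

lemma S_finite: "finite S" unfolding S_def using G_nonaff_finite by simp

lemma step:
  assumes y: "y \<in> C" and l: "1 < rho y" "rho y \<le> s"
    and v: "u0 \<le> v" and v': "\<alpha> + rho y * (v - \<alpha>) \<le> \<alpha> + \<delta> / s"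
    and na: "\<not> affnear G v"
  shows "\<not> affnear G (\<alpha> + rho y * (v - \<alpha>))"
proof
  define l where "l = rho y"
  define v' where "v' = \<alpha> + l * (v - \<alpha>)"
  assume a': "affnear G (\<alpha> + rho y * (v - \<alpha>))"
  then have a'': "affnear G v'" unfolding v'_def l_def .
  obtain e where e: "e > 0" "\<forall>u\<in>{\<alpha>..<\<alpha>+e}. y u = \<alpha> + l * (u - \<alpha>)" using rho_spec[OF y] unfolding l_def by blast
  have lpos: "0 < l" "l \<le> s" "1 < l" using l unfolding l_def by auto
  have ylin: "y t = \<alpha> + l * (t - \<alpha>)" if "\<alpha> \<le> t" "t < \<alpha> + \<delta>" for t
    by (rule y_lin_alpha[OF y e(1) lpos(1,2)]) (use e that in auto)
  have va: "\<alpha> < v" using v u0_props by simp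
  have "v - \<alpha> \<le> l * (v - \<alpha>)" using lpos va by simp
  then have vv': "v \<le> v'" unfolding v'_def by simp
  have v'd: "v' \<le> \<alpha> + \<delta> / s" using v' unfolding v'_def l_def .
  have vd: "v < \<alpha> + \<delta>" using vv' v'd u0_props by simp
  have yv: "y v = v'" unfolding v'_def using ylin va vd by simp
  have ay: "affnear y v"
  proof (rule affnearI[of "min (v - \<alpha>) (\<alpha> + \<delta> - v)" _ _ l "\<alpha> - l * \<alpha>"])
    show "min (v - \<alpha>) (\<alpha> + \<delta> - v) > 0" using va vd by simp
    fix u assume "\<bar>u - v\<bar> < min (v - \<alpha>) (\<alpha> + \<delta> - v)"
    then have "\<alpha> \<le> u" "u < \<alpha> + \<delta>" by (auto simp: abs_less_iff)
    then show "y u = l * u + (\<alpha> - l * \<alpha>)" using ylin by (simp add: algebra_simps)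
  qed
  have "affnear G (y v)" using a'' yv by simp
  then have "affnear (\<lambda>u. G (y u)) v" by (rule affnear_comp[OF ay])
  then have comp: "affnear (\<lambda>u. y (G u)) v" using G_comm_y[OF y] by simp
  have Gv: "p - dp < G v" "G v < p" using G_range[of v] v vv' v'd by auto
  have Gv': "p - dp < G v'" "G v' < p" using G_range[of v'] v vv' v'd by auto
  have yGv: "y (G v) = G v'" using G_comm_y[OF y] yv by metis
  obtain \<eta> \<mu> c where yaff: "\<eta> > 0" "\<mu> \<noteq> 0" "\<forall>u. \<bar>u - G v\<bar> < \<eta> \<longrightarrow> y u = \<mu> * u + c"
    using y_aff_p[OF y Gv] Gv' yGv by auto
  have "affnear G v" by (rule affnear_cancel[OF comp G_cont yaff(1) _ yaff(2)]) (use yaff(3) in auto)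
  then show False using na by simp
qed

lemma count:
  assumes y: "y \<in> C" and l: "1 < rho y" "rho y \<le> s"
  shows "s < rho y ^ card S"
proof (rule ccontr)
  define l where "l = rho y"
  define k where "k = card S"
  assume "\<not> s < rho y ^ card S"
  then have lk: "l ^ k \<le> s" unfolding l_def k_def by simp
  have l1: "1 < l" using l unfolding l_def by simp
  obtain v0 where v0: "u0 \<le> v0" "v0 \<le> x u0" "\<not> affnear G v0" using exists_v0 by blast
  have v0a: "\<alpha> < v0" using v0 u0_props by simp
  define v where "v j = \<alpha> + l ^ j * (v0 - \<alpha>)" for j
  have vbound: "u0 \<le> v j \<and> v j \<le> \<alpha> + \<delta> / s" if "j \<le> k" for j
  proof
    have "1 \<le> l ^ j" using l1 by simp
    then have "v0 - \<alpha> \<le> l ^ j * (v0 - \<alpha>)" using v0a by (simp add: mult_le_cancel_right1)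
    then show "u0 \<le> v j" unfolding v_def using v0 by simp
    have "l ^ j \<le> l ^ k" using l1 that by (simp add: power_increasing)
    then have lj: "l ^ j \<le> s" using lk by simp
    have "v0 - \<alpha> \<le> \<delta> / s ^ 2" using v0 u0_props by simp
    then have "l ^ j * (v0 - \<alpha>) \<le> s * (\<delta> / s ^ 2)" using lj v0a l1 s1
      by (intro mult_mono) auto
    also have "s * (\<delta> / s ^ 2) = \<delta> / s" using s1 by (simp add: power2_eq_square)
    finally show "v j \<le> \<alpha> + \<delta> / s" unfolding v_def by simp
  qed
  have na: "\<not> affnear G (v j)" if "j \<le> k" for j
    using that
  proof (induction j)
    case 0 then show ?case using v0 unfolding v_def by simp
  next
    case (Suc j)
    have vs: "v (Suc j) = \<alpha> + l * (v j - \<alpha>)" unfolding v_def by (simp add: algebra_simps)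
    have b1: "u0 \<le> v j" using vbound[of j] Suc.prems by simp
    have b2: "v (Suc j) \<le> \<alpha> + \<delta> / s" using vbound[of "Suc j"] Suc.prems by simp
    then have b3: "\<alpha> + rho y * (v j - \<alpha>) \<le> \<alpha> + \<delta> / s" using vs l_def by simp
    have b4: "\<not> affnear G (v j)" using Suc by simp
    have "\<not> affnear G (\<alpha> + rho y * (v j - \<alpha>))" by (rule step[OF y l b1 b3 b4])
    then show ?case using vs l_def by simp
  qed
  have sub: "v ` {0..k} \<subseteq> S" unfolding S_def nonaff_def using na vbound by auto
  have inj: "inj_on v {0..k}"
  proof (rule inj_onI)
    fix i j assume "v i = v j"
    then have "l ^ i * (v0 - \<alpha>) = l ^ j * (v0 - \<alpha>)" unfolding v_def by simp
    then have "l ^ i = l ^ j" using v0a by simp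
    then show "i = j" using l1 by (simp add: power_inject_exp)
  qed
  have "card (v ` {0..k}) = k + 1" using card_image[OF inj] by simp
  moreover have "card (v ` {0..k}) \<le> card S" using card_mono[OF S_finite sub] .
  ultimately show False unfolding k_def by simp
qed

lemma S_pos: "card S \<ge> 1"
proof -
  obtain v0 where v0: "u0 \<le> v0" "v0 \<le> x u0" "\<not> affnear G v0" using exists_v0 by blast
  then have "v0 \<in> S" unfolding S_def nonaff_def using u0_props by auto
  then have "S \<noteq> {}" by auto
  then show ?thesis using S_finite by (simp add: Suc_leI card_gt_0_iff)
qed

lemma discrete: assumes y: "y \<in> C" "1 < rho y" shows "s < rho y ^ card S"
proof (cases "rho y \<le> s")
  case True then show ?thesis using count y by simp
next
  case False
  have "rho y \<le> rho y ^ card S" using S_pos y by (simp add: self_le_power)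
  then show ?thesis using False by simp
qed

end

context core2
begin

lemma cyclic: "cyclic_set C"
proof -
  define k where "k = card S"
  have k1: "0 < k" using S_pos unfolding k_def by simp
  define m0 where "m0 = root k s"
  have m0: "1 < m0" unfolding m0_def using k1 s1 by simp
  have m0k: "m0 ^ k = s" unfolding m0_def using k1 s1 by simp
  have bnd: "m0 < rho y" if "y \<in> C" "1 < rho y" for y
  proof -
    have "m0 ^ k < rho y ^ k" using discrete[OF that] m0k unfolding k_def by simp
    then show ?thesis using that by (intro power_less_imp_less_base[of m0 k]) auto
  qed
  define R where "R = rho ` {y \<in> C. 1 < rho y}"
  have xR: "s \<in> R" unfolding R_def using x_in_C rho_x s1 by (auto intro!: image_eqI[of s rho x])
  then have Rne: "R \<noteq> {}" by auto
  have Rb: "bdd_below R" unfolding R_def by (rule bdd_belowI[of _ 1]) auto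
  define \<gamma> where "\<gamma> = Inf R"
  have Rlow: "\<gamma> \<le> t" if "t \<in> R" for t unfolding \<gamma>_def by (rule cInf_lower[OF that Rb])
  have gm0: "m0 \<le> \<gamma>" unfolding \<gamma>_def by (rule cInf_greatest[OF Rne]) (auto simp: R_def intro: less_imp_le bnd)
  have closeR: "\<exists>t\<in>R. t < b" if "\<gamma> < b" for b
    using cInf_lessD[OF Rne, of b] that unfolding \<gamma>_def by auto
  have gR: "\<gamma> \<in> R"
  proof (rule ccontr)
    assume nR: "\<gamma> \<notin> R"
    have "\<gamma> < \<gamma> * m0" using m0 gm0 by simp
    then obtain t1 where t1: "t1 \<in> R" "t1 < \<gamma> * m0" using closeR by blast
    have "\<gamma> < t1" using Rlow[OF t1(1)] nR t1(1) by (cases "\<gamma> = t1") auto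
    then obtain t2 where t2: "t2 \<in> R" "t2 < t1" using closeR by blast
    have "\<gamma> < t2" using Rlow[OF t2(1)] nR t2(1) by (cases "\<gamma> = t2") auto
    obtain y1 where y1: "y1 \<in> C" "1 < rho y1" "rho y1 = t1" using t1 unfolding R_def by auto
    obtain y2 where y2: "y2 \<in> C" "1 < rho y2" "rho y2 = t2" using t2 unfolding R_def by auto
    define z where "z = y1 \<circ> inv y2"
    have zC: "z \<in> C" unfolding z_def by (rule cent_comp[OF y1(1) cent_inv[OF y2(1)]])
    have rz: "rho z = t1 / t2" unfolding z_def using rho_comp[OF y1(1) cent_inv[OF y2(1)]] rho_inv[OF y2(1)] y1 y2
      by (simp add: field_simps)
    have t2pos: "t2 > 0" using y2 by simp
    have "1 < t1 / t2" using t2 t2pos by simp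
    moreover have "t1 / t2 < m0"
    proof -
      have "t1 < \<gamma> * m0" by (rule t1(2))
      also have "\<dots> < t2 * m0" using \<open>\<gamma> < t2\<close> m0 by simp
      finally show ?thesis using t2pos by (simp add: field_simps)
    qed
    ultimately show False using bnd[OF zC] rz by simp
  qed
  obtain g where g: "g \<in> C" "1 < rho g" "rho g = \<gamma>" using gR unfolding R_def by auto
  have g1: "1 < \<gamma>" using g by simp
  define c where "c = ln \<gamma>"
  have cpos: "c > 0" unfolding c_def using g1 by simp
  have gpow: "\<gamma> powr a = exp (a * c)" for a unfolding c_def powr_def using g1 by simp
  have "y \<in> range (zpow g)" if y: "y \<in> C" for y
  proof -
    have ypos: "rho y > 0" using rho_pos[OF y] .
    define L where "L = ln (rho y) / c"
    define n where "n = \<lfloor>L\<rfloor>"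
    have nL: "real_of_int n \<le> L" "L < real_of_int n + 1" unfolding n_def by linarith+
    have Lc: "L * c = ln (rho y)" unfolding L_def using cpos by simp
    have l1: "real_of_int n * c \<le> ln (rho y)" using nL cpos Lc by (metis mult_right_mono less_imp_le)
    have l2: "ln (rho y) < (real_of_int n + 1) * c" using nL cpos Lc by (metis mult_strict_right_mono)
    define z where "z = y \<circ> zpow g (- n)"
    have zC: "z \<in> C" unfolding z_def by (rule cent_comp[OF y cent_zpow[OF g(1)]])
    have "rho z = rho y * \<gamma> powr real_of_int (- n)" unfolding z_def
      using rho_comp[OF y cent_zpow[OF g(1)]] rho_zpow[OF g(1)] g(3) by simp
    also have "\<dots> = exp (ln (rho y)) * exp (- real_of_int n * c)" using ypos gpow by simp
    also have "\<dots> = exp (ln (rho y) - real_of_int n * c)" by (simp add: exp_add[symmetric])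
    finally have rz: "rho z = exp (ln (rho y) - real_of_int n * c)" .
    have "rho z \<ge> 1" unfolding rz using l1 by simp
    moreover have "rho z < \<gamma>"
    proof -
      have "ln (rho y) - real_of_int n * c < c" using l2 by (simp add: algebra_simps)
      then have "exp (ln (rho y) - real_of_int n * c) < exp c" by simp
      then show ?thesis unfolding rz c_def using g1 by simp
    qed
    moreover have "\<not> (1 < rho z)"
    proof
      assume "1 < rho z"
      then have "rho z \<in> R" unfolding R_def using zC by auto
      then have "\<gamma> \<le> rho z" by (rule Rlow)
      then show False using \<open>rho z < \<gamma>\<close> by simp
    qed
    ultimately have "rho z = 1" by simp
    then have "ln (rho y) - real_of_int n * c = 0" unfolding rz by simp
    then have "rho y = exp (real_of_int n * c)" using ypos by (metis diff_eq_eq exp_ln add.commute add_0)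
    also have "\<dots> = rho (zpow g n)" using rho_zpow[OF g(1)] g(3) gpow by simp
    finally have "y = zpow g n" by (rule rho_inj[OF y cent_zpow[OF g(1)]])
    then show ?thesis by simp
  qed
  moreover have "zpow g n \<in> C" for n by (rule cent_zpow[OF g(1)])
  ultimately have "C = range (zpow g)" by blast
  then show ?thesis unfolding cyclic_set_def cent_def by blast
qed

end

context core
begin

lemma core_cyclic: "cyclic_set C"
proof -
  obtain dp s' where H: "dp > 0" "\<alpha> < p - dp" "0 < s'" "s' < 1"
    "\<forall>u. p - dp \<le> u \<longrightarrow> u \<le> p \<longrightarrow> x u = p + s' * (u - p)" using p_zone by blast
  interpret c2: core2 r \<Lambda> A \<alpha> \<beta> x s \<delta> dp s'
    by unfold_locales (use H in auto)
  show ?thesis by (rule c2.cyclic)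
qed

end


theorem lemma4p2:
  fixes r \<alpha> \<beta> :: real and \<Lambda> A :: "real set" and x :: "real \<Rightarrow> real"
  assumes "admissible r \<Lambda> A"
    and "\<alpha> \<in> {0..r} \<inter> A" and "\<beta> \<in> {0..r} \<inter> A" and "\<alpha> < \<beta>"
    and "x \<in> Fsupp r \<Lambda> A {\<alpha><..<\<beta>}"
    and "fixset r x \<inter> {\<alpha><..<\<beta>} \<inter> A = {}"
  shows "cyclic_set (centralizer_in (Fsupp r \<Lambda> A {\<alpha><..<\<beta>}) x)"
proof -
  interpret adm r \<Lambda> A by unfold_locales (rule assms(1))
  interpret st: setting r \<Lambda> A \<alpha> \<beta> x by unfold_locales (use assms in auto)
  obtain e s0 where e: "e > 0" "s0 \<in> \<Lambda>" "\<forall>u\<in>{\<alpha>..<\<alpha>+e}. x u = \<alpha> + s0 * (u - \<alpha>)"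
    using st.C_germ[OF st.x_in_C] by blast
  define \<delta> where "\<delta> = min e (\<beta> - \<alpha>)"
  have d: "\<delta> > 0" "\<delta> \<le> e" "\<alpha> + \<delta> \<le> \<beta>" unfolding \<delta>_def using e assms(4) by auto
  have xl: "\<And>t. \<alpha> \<le> t \<Longrightarrow> t < \<alpha> + \<delta> \<Longrightarrow> x t = \<alpha> + s0 * (t - \<alpha>)" using e d by auto
  have s0pos: "s0 > 0" using Lpos e by simp
  have s01: "s0 \<noteq> 1"
  proof
    assume "s0 = 1"
    obtain q where q: "q \<in> A" "\<alpha> < q" "q < \<alpha> + \<delta>" using A_dense[of \<alpha> "\<alpha> + \<delta>"] d by auto
    have "x q = q" using xl q \<open>s0 = 1\<close> by simp
    moreover have "q \<in> st.I" using q d by simp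
    ultimately show False using st.no_fixA q by blast
  qed
  have cd: "centralizer_in (Fsupp r \<Lambda> A {\<alpha><..<\<beta>}) x = st.C" unfolding cent_def by simp
  show ?thesis
  proof (cases "s0 > 1")
    case True
    interpret co: core r \<Lambda> A \<alpha> \<beta> x s0 \<delta>
      by unfold_locales (use d True xl in auto)
    show ?thesis unfolding cd by (rule co.core_cyclic)
  next
    case False
    then have s0l: "s0 < 1" using s01 by simp
    define x' where "x' = inv x"
    have xb: "bij x" by (rule st.x_bij)
    have x'F: "x' \<in> Fsupp r \<Lambda> A {\<alpha><..<\<beta>}" unfolding x'_def by (rule Fsupp_inv[OF assms(5)])
    have fx: "fixset r x' = fixset r x"
    proof -
      have "x' t = t \<longleftrightarrow> x t = t" for t
      proof
        assume "x' t = t" then have "x (x' t) = x t" by simp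
        then show "x t = t" unfolding x'_def using st.x_inv1 by simp
      next
        assume "x t = t" then have "x' (x t) = x' t" by simp
        then show "x' t = t" unfolding x'_def using st.x_inv2 by simp
      qed
      then show ?thesis unfolding fixset_def by simp
    qed
    interpret st': setting r \<Lambda> A \<alpha> \<beta> x' by unfold_locales (use assms x'F fx in auto)
    have xl': "x' t = \<alpha> + inverse s0 * (t - \<alpha>)" if t: "\<alpha> \<le> t" "t < \<alpha> + s0 * \<delta>" for t
    proof -
      define u where "u = \<alpha> + inverse s0 * (t - \<alpha>)"
      have u1: "\<alpha> \<le> u" unfolding u_def using t s0pos by simp
      have "inverse s0 * (t - \<alpha>) < inverse s0 * (s0 * \<delta>)" using t s0pos by (intro mult_strict_left_mono) auto
      moreover have "inverse s0 * (s0 * \<delta>) = \<delta>" using s0pos by simp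
      ultimately have u2: "u < \<alpha> + \<delta>" unfolding u_def by simp
      have X: "x u = \<alpha> + s0 * (u - \<alpha>)" by (rule xl[OF u1 u2])
      have "\<alpha> + s0 * (u - \<alpha>) = t" unfolding u_def using s0pos by (simp add: field_simps)
      then have "x u = t" using X by simp
      then have "x' (x u) = x' t" by simp
      then show ?thesis unfolding x'_def using st.x_inv2 u_def by simp
    qed
    have is1: "inverse s0 > 1" using s0l s0pos by (simp add: one_less_inverse)
    interpret co: core r \<Lambda> A \<alpha> \<beta> x' "inverse s0" "s0 * \<delta>"
      by unfold_locales (use d is1 xl' s0pos s0l in \<open>auto intro: order_trans[of _ "\<alpha> + \<delta>"] simp: mult_le_cancel_right1\<close>)
    have "cent {\<alpha><..<\<beta>} x' = cent {\<alpha><..<\<beta>} x"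
    proof
      show "cent {\<alpha><..<\<beta>} x' \<subseteq> cent {\<alpha><..<\<beta>} x"
      proof
        fix y assume "y \<in> cent {\<alpha><..<\<beta>} x'"
        then have y: "y \<in> Fsupp r \<Lambda> A {\<alpha><..<\<beta>}" "y \<circ> x' = x' \<circ> y" using cent_iff by auto
        have yb: "bij y" using F_bij[OF Fsupp_D(1)[OF y(1)]] .
        have "inv y \<circ> x' = x' \<circ> inv y" by (rule comm_inv[OF yb y(2)])
        have "\<And>t. y (x' t) = x' (y t)" using y(2) by (simp add: fun_eq_iff)
        then have "y (x t) = x (y t)" for t
        proof -
          have "y (x' (x t)) = x' (y (x t))" using \<open>\<And>t. y (x' t) = x' (y t)\<close> by simp
          then have "y t = x' (y (x t))" unfolding x'_def using st.x_inv2 by simp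
          then have "x (y t) = x (x' (y (x t)))" by simp
          then show ?thesis unfolding x'_def using st.x_inv1 by simp
        qed
        then have "y \<circ> x = x \<circ> y" by (simp add: fun_eq_iff)
        then show "y \<in> cent {\<alpha><..<\<beta>} x" using y(1) cent_iff by simp
      qed
    next
      show "cent {\<alpha><..<\<beta>} x \<subseteq> cent {\<alpha><..<\<beta>} x'"
      proof
        fix y assume "y \<in> cent {\<alpha><..<\<beta>} x"
        then have y: "y \<in> Fsupp r \<Lambda> A {\<alpha><..<\<beta>}" "y \<circ> x = x \<circ> y" using cent_iff by auto
        have "x' \<circ> y = y \<circ> x'" unfolding x'_def using comm_inv[OF xb] y(2) by (metis)
        then show "y \<in> cent {\<alpha><..<\<beta>} x'" using y(1) cent_iff by simp
      qed
    qed
    then show ?thesis unfolding cd using co.core_cyclic by simp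
  qed
qed


end
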